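(* Let $M$ be an adequate monoid, $\chi:\Sigma\to M$ a function, $\rho$ the map defined below, and $\hat\rho:T^1(\Sigma)\to M$ the restriction of $\rho$ to (isomorphism types of) pruned trees. Then $\hat\rho$ is a $(2,1,1,0)$-morphism from $T^1(\Sigma)$, with pruned multiplication, $+$, $*$ and the trivial tree as identity, to $M$.
   Context: Adequate monoid: a monoid $M$ whose idempotents commute and in which every $\mathcal{L}^*$-class and every $\mathcal{R}^*$-class contains an idempotent, where $a\,\mathcal{L}^*\,b$ iff ($ax=ay\Leftrightarrow bx=by$ for all $x,y\in M$) and $a\,\mathcal{R}^*\,b$ iff ($xa=ya\Leftrightarrow xb=yb$ for all $x,y\in M$); $x^+$ and $x^*$ denote the unique idempotents $\mathcal{R}^*$- and $\mathcal{L}^*$-related to $x$; $M$ is a $(2,1,1,0)$-algebra. Trees: a $\Sigma$-tree is a finite directed graph whose underlying undirected graph is a tree, each edge $e$ having initial vertex $\alpha(e)$, terminal vertex $\omega(e)$ and label $\lambda(e)\in\Sigma$, with distinguished start and end vertices such that there is a (possibly empty) directed path (the trunk) from start to end vertex; trivial if it has one vertex, idempotent if start equals end vertex. A morphism $X\to Y$ maps vertices to vertices and edges to edges preserving $\alpha,\omega,\lambda$ and start/end vertices; isomorphisms are bijective morphisms. A retraction is an idempotent morphism $X\to X$, its image a retract; $X$ is pruned if it has no non-identity retraction. Every tree has a pruned retract, unique up to isomorphism, with isomorphism type $\overline{X}$. $T^1(\Sigma)$ is the set of isomorphism types of pruned trees. Unpruned operations: $X\times Y$ identifies the end vertex of (a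 copy of) $X$ with the start vertex of (a disjoint copy of) $Y$, start vertex that of $X$, end vertex that of $Y$; $X^{(+)}$ is $X$ with end vertex moved to the start vertex; $X^{( * )}$ is $X$ with start vertex moved to the end vertex. Pruned operations: $XY=\overline{X\times Y}$, $X^+=\overline{X^{(+)}}$, $X^*=\overline{X^{( * )}}$. $\tau$ (on idempotent trees) is defined recursively: $\tau(X)=1$ if $X$ has no edges; otherwise with $v$ the start (= end) vertex, for each edge $e$ with $\alpha(e)=v$ let $X_e$ be the component of $X$ minus $e$ containing $\omega(e)$, as an idempotent tree at $\omega(e)$, and for each edge $e$ with $\omega(e)=v$ let $X_e$ be the component of $X$ minus $e$ containing $\alpha(e)$, as an idempotent tree at $\alpha(e)$; then $\tau(X)=\prod_{e:\alpha(e)=v}[\chi(\lambda(e))\tau(X_e)]^+\cdot\prod_{e:\omega(e)=v}[\tau(X_e)\chi(\lambda(e))]^*$ (commuting idempotents, order irrelevant). For any tree $X$ with trunk vertices $v_0,\dots,v_n$ in order and $a_i$ the label of the trunk edge from $v_{i-1}$ to $v_i$, let $X_i$ be the component containing $v_i$ of $X$ with all trunk edges removed, as an idempotent tree at $v_i$; $\rho(X)=\tau(X_0)\chi(a_1)\tau(X_1)\cdots\chi(a_n)\tau(X_n)$. *)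

theory Defs
  imports Main
begin

definition Lstar :: "'m::monoid_mult \<Rightarrow> 'm \<Rightarrow> bool" where
  "Lstar a b \<longleftrightarrow> (\<forall>x y. a * x = a * y \<longleftrightarrow> b * x = b * y)"

definition Rstar :: "'m::monoid_mult \<Rightarrow> 'm \<Rightarrow> bool" where
  "Rstar a b \<longleftrightarrow> (\<forall>x y. x * a = y * a \<longleftrightarrow> x * b = y * b)"

definition idem :: "'m::monoid_mult \<Rightarrow> bool" where
  "idem e \<longleftrightarrow> e * e = e"

definition adequate :: "'m::monoid_mult itself \<Rightarrow> bool" where
  "adequate _ \<longleftrightarrow>
     (\<forall>e f :: 'm. idem e \<and> idem f \<longrightarrow> e * f = f * e) \<and>
     (\<forall>a :: 'm. \<exists>e. idem e \<and> Lstar a e) \<and>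
     (\<forall>a :: 'm. \<exists>e. idem e \<and> Rstar a e)"

definition aplus :: "'m::monoid_mult \<Rightarrow> 'm" where
  "aplus x = (THE e. idem e \<and> Rstar x e)"

definition astar :: "'m::monoid_mult \<Rightarrow> 'm" where
  "astar x = (THE e. idem e \<and> Lstar x e)"

record ('v, 'e, 's) stree =
  tverts :: "'v set"
  tedges :: "'e set"
  tsrc   :: "'e \<Rightarrow> 'v"
  ttgt   :: "'e \<Rightarrow> 'v"
  tlab   :: "'e \<Rightarrow> 's"
  tstart :: "'v"
  tend   :: "'v"

primrec is_dpath :: "('v, 'e, 's) stree \<Rightarrow> 'v \<Rightarrow> 'e list \<Rightarrow> 'v \<Rightarrow> bool" where
  "is_dpath X u [] w \<longleftrightarrow> u = w"
| "is_dpath X u (e # es) w \<longleftrightarrow> e \<in> tedges X \<and> tsrc X e = u \<and> is_dpath X (ttgt X e) es w"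

definition undir_adj :: "('v, 'e, 's) stree \<Rightarrow> ('v \<times> 'v) set" where
  "undir_adj X = (\<Union>e\<in>tedges X. {(tsrc X e, ttgt X e), (ttgt X e, tsrc X e)})"

definition is_tree :: "('v, 'e, 's) stree \<Rightarrow> bool" where
  "is_tree X \<longleftrightarrow>
     finite (tverts X) \<and> finite (tedges X) \<and>
     (\<forall>e\<in>tedges X. tsrc X e \<in> tverts X \<and> ttgt X e \<in> tverts X) \<and>
     tstart X \<in> tverts X \<and> tend X \<in> tverts X \<and>
     (\<forall>u\<in>tverts X. \<forall>w\<in>tverts X. (u, w) \<in> (undir_adj X)\<^sup>*) \<and>
     card (tedges X) + 1 = card (tverts X) \<and>
     (\<exists>es. is_dpath X (tstart X) es (tend X))"

definition is_morphism ::
  "('v, 'e, 's) stree \<Rightarrow> ('w, 'f, 's) stree \<Rightarrow> ('v \<Rightarrow> 'w) \<Rightarrow> ('e \<Rightarrow> 'f) \<Rightarrow> bool" where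
  "is_morphism X Y fv fe \<longleftrightarrow>
     (\<forall>v\<in>tverts X. fv v \<in> tverts Y) \<and>
     (\<forall>e\<in>tedges X. fe e \<in> tedges Y \<and>
        tsrc Y (fe e) = fv (tsrc X e) \<and> ttgt Y (fe e) = fv (ttgt X e) \<and>
        tlab Y (fe e) = tlab X e) \<and>
     fv (tstart X) = tstart Y \<and> fv (tend X) = tend Y"

definition is_retraction :: "('v, 'e, 's) stree \<Rightarrow> ('v \<Rightarrow> 'v) \<Rightarrow> ('e \<Rightarrow> 'e) \<Rightarrow> bool" where
  "is_retraction X fv fe \<longleftrightarrow> is_morphism X X fv fe \<and>
     (\<forall>v\<in>tverts X. fv (fv v) = fv v) \<and> (\<forall>e\<in>tedges X. fe (fe e) = fe e)"

definition retract_image ::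
  "('v, 'e, 's) stree \<Rightarrow> ('v \<Rightarrow> 'v) \<Rightarrow> ('e \<Rightarrow> 'e) \<Rightarrow> ('v, 'e, 's) stree" where
  "retract_image X fv fe = X\<lparr>tverts := fv ` tverts X, tedges := fe ` tedges X\<rparr>"

definition is_pruned :: "('v, 'e, 's) stree \<Rightarrow> bool" where
  "is_pruned X \<longleftrightarrow> (\<forall>fv fe. is_retraction X fv fe \<longrightarrow>
      (\<forall>v\<in>tverts X. fv v = v) \<and> (\<forall>e\<in>tedges X. fe e = e))"

text \<open>Z is a pruned retract of X (its isomorphism type is the pruned form of X).\<close>
definition is_pruned_retract :: "('v, 'e, 's) stree \<Rightarrow> ('v, 'e, 's) stree \<Rightarrow> bool" where
  "is_pruned_retract Z X \<longleftrightarrow>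
     (\<exists>fv fe. is_retraction X fv fe \<and> Z = retract_image X fv fe) \<and> is_pruned Z"

definition glue :: "('v, 'e, 's) stree \<Rightarrow> ('w, 'f, 's) stree \<Rightarrow> 'w \<Rightarrow> 'v + 'w" where
  "glue X Y w = (if w = tstart Y then Inl (tend X) else Inr w)"

definition tprod :: "('v, 'e, 's) stree \<Rightarrow> ('w, 'f, 's) stree \<Rightarrow> ('v + 'w, 'e + 'f, 's) stree" where
  "tprod X Y = \<lparr> tverts = Inl ` tverts X \<union> glue X Y ` tverts Y,
                tedges = Inl ` tedges X \<union> Inr ` tedges Y,
                tsrc = case_sum (Inl \<circ> tsrc X) (glue X Y \<circ> tsrc Y),
                ttgt = case_sum (Inl \<circ> ttgt X) (glue X Y \<circ> ttgt Y),
                tlab = case_sum (tlab X) (tlab Y),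
                tstart = Inl (tstart X),
                tend = glue X Y (tend Y) \<rparr>"

definition tplus :: "('v, 'e, 's) stree \<Rightarrow> ('v, 'e, 's) stree" where
  "tplus X = X\<lparr>tend := tstart X\<rparr>"

definition tstar :: "('v, 'e, 's) stree \<Rightarrow> ('v, 'e, 's) stree" where
  "tstar X = X\<lparr>tstart := tend X\<rparr>"

text \<open>Product over a finite set of (commuting idempotent) factors, in some enumeration order.\<close>
definition prodE :: "'e set \<Rightarrow> ('e \<Rightarrow> 'm::monoid_mult) \<Rightarrow> 'm" where
  "prodE S f = prod_list (map f (SOME xs. set xs = S \<and> distinct xs))"

text \<open>tauF chi X n v P: the value tau of the component of X minus the edges P containing v,
  viewed as an idempotent tree at v, computed with recursion depth n (the excluded edge
  in recursive calls is the edge towards the parent).\<close>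
primrec tauF :: "('s \<Rightarrow> 'm::monoid_mult) \<Rightarrow> ('v, 'e, 's) stree \<Rightarrow> nat \<Rightarrow> 'v \<Rightarrow> 'e set \<Rightarrow> 'm" where
  "tauF chi X 0 v P = 1"
| "tauF chi X (Suc n) v P =
     prodE {e\<in>tedges X. tsrc X e = v \<and> e \<notin> P}
       (\<lambda>e. aplus (chi (tlab X e) * tauF chi X n (ttgt X e) {e})) *
     prodE {e\<in>tedges X. ttgt X e = v \<and> e \<notin> P}
       (\<lambda>e. astar (tauF chi X n (tsrc X e) {e} * chi (tlab X e)))"

text \<open>tau on an idempotent tree (depth card edges + 1 suffices).\<close>
definition tau :: "('s \<Rightarrow> 'm::monoid_mult) \<Rightarrow> ('v, 'e, 's) stree \<Rightarrow> 'm" where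
  "tau chi X = tauF chi X (Suc (card (tedges X))) (tstart X) {}"

definition trunk :: "('v, 'e, 's) stree \<Rightarrow> 'e list" where
  "trunk X = (THE es. is_dpath X (tstart X) es (tend X))"

text \<open>rho X = tau(X_0) chi(a_1) tau(X_1) ... chi(a_n) tau(X_n).\<close>
definition rho :: "('s \<Rightarrow> 'm::monoid_mult) \<Rightarrow> ('v, 'e, 's) stree \<Rightarrow> 'm" where
  "rho chi X =
     (let es = trunk X; N = Suc (card (tedges X));
          tv = (\<lambda>v. tauF chi X N v (set es))
      in tv (tstart X) * prod_list (map (\<lambda>e. chi (tlab X e) * tv (ttgt X e)) es))"

end

theory Submission
  imports Defs
begin

locale adq =
  assumes adq: "adequate TYPE('m::monoid_mult)"
begin

definition le :: "'m \<Rightarrow> 'm \<Rightarrow> bool" where "le a b \<longleftrightarrow> a * b = a"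

lemma idem_comm: "idem (e::'m) \<Longrightarrow> idem f \<Longrightarrow> e * f = f * e"
  using adq unfolding adequate_def by blast

lemma ex_R: "\<exists>e::'m. idem e \<and> Rstar a e"
  using adq unfolding adequate_def by blast

lemma ex_L: "\<exists>e::'m. idem e \<and> Lstar a e"
  using adq unfolding adequate_def by blast

lemma Rstar_sym: "Rstar a b \<Longrightarrow> Rstar b a"
  unfolding Rstar_def by blast
lemma Rstar_trans: "Rstar a b \<Longrightarrow> Rstar b c \<Longrightarrow> Rstar a c"
  unfolding Rstar_def by blast
lemma Rstar_refl: "Rstar a a"
  unfolding Rstar_def by blast
lemma Lstar_sym: "Lstar a b \<Longrightarrow> Lstar b a"
  unfolding Lstar_def by blast
lemma Lstar_trans: "Lstar a b \<Longrightarrow> Lstar b c \<Longrightarrow> Lstar a c"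
  unfolding Lstar_def by blast
lemma Lstar_refl: "Lstar a a"
  unfolding Lstar_def by blast

lemma Rstar_idem_left: "idem e \<Longrightarrow> Rstar a e \<Longrightarrow> e * a = a"
  unfolding Rstar_def idem_def by (metis mult_1_left)
lemma Lstar_idem_right: "idem e \<Longrightarrow> Lstar a e \<Longrightarrow> a * e = a"
  unfolding Lstar_def idem_def by (metis mult_1_right)

lemma Rstar_idem_eq: "idem (e::'m) \<Longrightarrow> idem f \<Longrightarrow> Rstar e f \<Longrightarrow> e = f"
proof -
  assume e: "idem e" and f: "idem f" and r: "Rstar e f"
  have 1: "f * e = e" using Rstar_idem_left[OF f r] .
  have 2: "e * f = f" using Rstar_idem_left[OF e Rstar_sym[OF r]] .
  show "e = f" using 1 2 idem_comm[OF e f] by simp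
qed

lemma Lstar_idem_eq: "idem (e::'m) \<Longrightarrow> idem f \<Longrightarrow> Lstar e f \<Longrightarrow> e = f"
proof -
  assume e: "idem e" and f: "idem f" and r: "Lstar e f"
  have 1: "e * f = e" using Lstar_idem_right[OF f r] .
  have 2: "f * e = f" using Lstar_idem_right[OF e Lstar_sym[OF r]] .
  show "e = f" using 1 2 idem_comm[OF e f] by simp
qed

lemma aplus_spec: "idem (aplus (a::'m)) \<and> Rstar a (aplus a)"
proof -
  obtain e where e: "idem e \<and> Rstar a e" using ex_R by blast
  have "\<And>f. idem f \<and> Rstar a f \<Longrightarrow> f = e"
    using e by (metis Rstar_idem_eq Rstar_sym Rstar_trans)
  then have "aplus a = e" unfolding aplus_def using e by (rule the_equality[rotated])
  then show ?thesis using e by simp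
qed

lemma astar_spec: "idem (astar (a::'m)) \<and> Lstar a (astar a)"
proof -
  obtain e where e: "idem e \<and> Lstar a e" using ex_L by blast
  have "\<And>f. idem f \<and> Lstar a f \<Longrightarrow> f = e"
    using e by (metis Lstar_idem_eq Lstar_sym Lstar_trans)
  then have "astar a = e" unfolding astar_def using e by (rule the_equality[rotated])
  then show ?thesis using e by simp
qed

lemma aplus_eqI: "idem e \<Longrightarrow> Rstar (a::'m) e \<Longrightarrow> aplus a = e"
  by (metis aplus_spec Rstar_idem_eq Rstar_sym Rstar_trans)
lemma astar_eqI: "idem e \<Longrightarrow> Lstar (a::'m) e \<Longrightarrow> astar a = e"
  by (metis astar_spec Lstar_idem_eq Lstar_sym Lstar_trans)

lemma idem_aplus[simp]: "idem (aplus (a::'m))" using aplus_spec by blast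
lemma idem_astar[simp]: "idem (astar (a::'m))" using astar_spec by blast

lemma aplus_absorb: "aplus a * (a::'m) = a"
  using aplus_spec Rstar_idem_left by blast
lemma astar_absorb: "(a::'m) * astar a = a"
  using astar_spec Lstar_idem_right by blast

lemma aplus_idem: "idem (e::'m) \<Longrightarrow> aplus e = e"
  by (rule aplus_eqI) (auto simp: Rstar_refl)
lemma astar_idem: "idem (e::'m) \<Longrightarrow> astar e = e"
  by (rule astar_eqI) (auto simp: Lstar_refl)

lemma aplus_mult_aplus: "aplus ((a::'m) * b) = aplus (a * aplus b)"
proof -
  have r: "Rstar (a * b) (a * aplus b)"
    unfolding Rstar_def
  proof (intro allI)
    fix x y
    have "Rstar b (aplus b)" using aplus_spec by blast
    then have "(x * a) * b = (y * a) * b \<longleftrightarrow> (x * a) * aplus b = (y * a) * aplus b"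
      unfolding Rstar_def by blast
    then show "x * (a * b) = y * (a * b) \<longleftrightarrow> x * (a * aplus b) = y * (a * aplus b)"
      by (simp add: mult.assoc)
  qed
  have "Rstar (a * aplus b) (aplus (a * aplus b))" using aplus_spec by blast
  then have "Rstar (a * b) (aplus (a * aplus b))" using r by (rule Rstar_trans[rotated])
  then show ?thesis by (rule aplus_eqI[OF idem_aplus])
qed

lemma astar_astar_mult: "astar ((a::'m) * b) = astar (astar a * b)"
proof -
  have r: "Lstar (a * b) (astar a * b)"
    unfolding Lstar_def
  proof (intro allI)
    fix x y
    have "Lstar a (astar a)" using astar_spec by blast
    then have "a * (b * x) = a * (b * y) \<longleftrightarrow> astar a * (b * x) = astar a * (b * y)"
      unfolding Lstar_def by blast
    then show "a * b * x = a * b * y \<longleftrightarrow> astar a * b * x = astar a * b * y"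
      by (simp add: mult.assoc)
  qed
  have "Lstar (astar a * b) (astar (astar a * b))" using astar_spec by blast
  then have "Lstar (a * b) (astar (astar a * b))" using r by (rule Lstar_trans[rotated])
  then show ?thesis by (rule astar_eqI[OF idem_astar])
qed

lemma idem_mult: "idem (e::'m) \<Longrightarrow> idem f \<Longrightarrow> idem (e * f)"
proof -
  assume e: "idem e" and f: "idem f"
  have "(e * f) * (e * f) = e * (f * e) * f" by (simp add: mult.assoc)
  also have "\<dots> = e * (e * f) * f" using idem_comm[OF e f] by simp
  also have "\<dots> = (e * e) * (f * f)" by (simp add: mult.assoc)
  also have "\<dots> = e * f" using e f by (simp add: idem_def)
  finally show ?thesis by (simp add: idem_def)
qed

lemma idem_one[simp]: "idem (1::'m)" by (simp add: idem_def)

lemma aplus_idem_mult: "idem (e::'m) \<Longrightarrow> aplus (e * a) = e * aplus a"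
proof -
  assume e: "idem e"
  have "aplus (e * a) = aplus (e * aplus a)" by (rule aplus_mult_aplus)
  also have "\<dots> = e * aplus a" by (rule aplus_idem[OF idem_mult[OF e idem_aplus]])
  finally show ?thesis .
qed

lemma astar_mult_idem: "idem (e::'m) \<Longrightarrow> astar (a * e) = astar a * e"
proof -
  assume e: "idem e"
  have "astar (a * e) = astar (astar a * e)" by (rule astar_astar_mult)
  also have "\<dots> = astar a * e" by (rule astar_idem[OF idem_mult[OF idem_astar e]])
  finally show ?thesis .
qed

lemma aplus_mult_le: "le (aplus ((a::'m) * b)) (aplus a)"
proof -
  have "aplus a * (a * b) = 1 * (a * b)" by (simp add: aplus_absorb flip: mult.assoc)
  then have "aplus a * aplus (a*b) = aplus (a * b)"
    using aplus_spec[of "a*b"] unfolding Rstar_def by (metis mult_1_left)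
  then show ?thesis unfolding le_def using idem_comm by (metis idem_aplus)
qed

lemma astar_mult_le: "le (astar ((a::'m) * b)) (astar b)"
proof -
  have "(a * b) * astar b = (a * b) * 1" by (simp add: astar_absorb mult.assoc)
  then have "astar (a*b) * astar b = astar (a * b)"
    using astar_spec[of "a*b"] unfolding Lstar_def by (metis mult_1_right)
  then show ?thesis unfolding le_def .
qed

lemma le_refl: "idem e \<Longrightarrow> le e e" by (simp add: le_def idem_def)
lemma le_trans: "le (a::'m) b \<Longrightarrow> le b c \<Longrightarrow> le a c"
  unfolding le_def by (metis mult.assoc)
lemma le_antisym: "idem (a::'m) \<Longrightarrow> idem b \<Longrightarrow> le a b \<Longrightarrow> le b a \<Longrightarrow> a = b"
  unfolding le_def by (metis idem_comm)
lemma le_one: "le a 1" by (simp add: le_def)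
lemma le_mult_left: "idem (a::'m) \<Longrightarrow> idem b \<Longrightarrow> le (a * b) b"
  unfolding le_def idem_def by (simp add: mult.assoc)
lemma le_mult_right: "idem (a::'m) \<Longrightarrow> idem b \<Longrightarrow> le (a * b) a"
  unfolding le_def idem_def by (metis idem_comm idem_def mult.assoc)
lemma le_mult_I: "idem (a::'m) \<Longrightarrow> le a b \<Longrightarrow> le a c \<Longrightarrow> le a (b * c)"
  unfolding le_def by (metis mult.assoc)

lemma aplus_mono: "idem (e::'m) \<Longrightarrow> idem f \<Longrightarrow> le e f \<Longrightarrow> le (aplus (x * e)) (aplus (x * f))"
proof -
  assume e: "idem e" and f: "idem f" and l: "le e f"
  have "e = f * e" using l idem_comm[OF e f] unfolding le_def by simp
  then have "x * e = (x * f) * e" by (metis mult.assoc)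
  then show ?thesis using aplus_mult_le[of "x*f" e] by simp
qed

lemma astar_mono: "idem (e::'m) \<Longrightarrow> idem f \<Longrightarrow> le e f \<Longrightarrow> le (astar (e * x)) (astar (f * x))"
proof -
  assume e: "idem e" and f: "idem f" and l: "le e f"
  have "e = e * f" using l unfolding le_def by simp
  then have "e * x = e * (f * x)" by (metis mult.assoc)
  then show ?thesis using astar_mult_le[of e "f*x"] by simp
qed

lemma keyK:
  assumes s: "idem (s::'m)" and s': "idem s'" and t: "idem t" and X: "idem X"
    and ss: "le s s'" and tX: "le (t * astar (s' * x)) X"
  shows "le (s * aplus (x * t)) (aplus (x * X))"
proof -
  define u where "u = astar (s * x)"
  define u' where "u' = astar (s' * x)"
  have u: "idem u" and u': "idem u'" by (simp_all add: u_def u'_def)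
  have uu': "u = u * u'" unfolding u_def u'_def
    using astar_mono[OF s s' ss, of x] unfolding le_def by simp
  have "s * aplus (x * t) = aplus (s * (x * t))" by (simp add: aplus_idem_mult s)
  also have "s * (x * t) = (s * x) * u * t" by (simp add: u_def astar_absorb mult.assoc)
  also have "\<dots> = (s * x) * u * u' * t" using uu' by (simp add: mult.assoc)
  also have "\<dots> = s * (x * (u' * t)) * u"
  proof -
    have "u * (u' * t) = (u' * t) * u" using idem_comm[OF u idem_mult[OF u' t]] .
    then show ?thesis by (simp add: mult.assoc)
  qed
  finally have eq: "s * aplus (x * t) = aplus (s * (x * (u' * t)) * u)" .
  have "le (aplus (s * (x * (u' * t)) * u)) (aplus (s * (x * (u' * t))))"
    by (metis aplus_mult_le mult.assoc)
  moreover have "aplus (s * (x * (u' * t))) = s * aplus (x * (u' * t))"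
    by (simp add: aplus_idem_mult s)
  moreover have "le (s * aplus (x * (u' * t))) (aplus (x * (u' * t)))"
    by (rule le_mult_left[OF s idem_aplus])
  moreover have "le (aplus (x * (u' * t))) (aplus (x * X))"
  proof (rule aplus_mono[OF idem_mult[OF u' t] X])
    show "le (u' * t) X" using tX idem_comm[OF t u'] unfolding u'_def by simp
  qed
  ultimately show ?thesis using eq le_trans by metis
qed

lemma keyK':
  assumes s: "idem (s::'m)" and s': "idem s'" and t: "idem t" and X: "idem X"
    and ss: "le s s'" and tX: "le (t * aplus (x * s')) X"
  shows "le (s * astar (t * x)) (astar (X * x))"
proof -
  define v where "v = aplus (x * s)"
  define v' where "v' = aplus (x * s')"
  have v: "idem v" and v': "idem v'" by (simp_all add: v_def v'_def)
  have vv': "v = v * v'" unfolding v_def v'_def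
  proof -
    have "x * s = x * s' * s" using ss idem_comm[OF s s'] unfolding le_def by (metis mult.assoc)
    then show "aplus (x * s) = aplus (x * s) * aplus (x * s')"
      using aplus_mult_le[of "x*s'" s] unfolding le_def by simp
  qed
  have "s * astar (t * x) = astar (t * x) * s"
    using idem_comm[OF s idem_astar] .
  also have "\<dots> = astar (t * x * s)" by (simp add: astar_mult_idem s)
  also have "t * x * s = t * (v * (x * s))" by (simp add: v_def aplus_absorb mult.assoc)
  also have "\<dots> = t * v * v' * (x * s)" using vv' by (simp add: mult.assoc)
  also have "\<dots> = v * ((v' * t) * x * s)"
  proof -
    have "t * v = v * t" using idem_comm[OF t v] .
    have "t * v * v' = v * (v' * t)"
      by (metis \<open>t * v = v * t\<close> idem_comm mult.assoc t v')
    then show ?thesis by (simp add: mult.assoc)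
  qed
  finally have eq: "s * astar (t * x) = astar (v * ((v' * t) * x * s))" .
  have "le (astar (v * ((v' * t) * x * s))) (astar ((v' * t) * x * s))"
    by (rule astar_mult_le)
  moreover have "astar ((v' * t) * x * s) = astar ((v' * t) * x) * s"
    by (simp add: astar_mult_idem s)
  moreover have "le (astar ((v' * t) * x) * s) (astar ((v' * t) * x))"
    by (rule le_mult_right[OF idem_astar s])
  moreover have "le (astar ((v' * t) * x)) (astar (X * x))"
  proof (rule astar_mono[OF idem_mult[OF v' t] X])
    show "le (v' * t) X" using tX idem_comm[OF t v'] unfolding v'_def by simp
  qed
  ultimately show ?thesis using eq le_trans by metis
qed


lemma idem_prod_list: "\<forall>a\<in>set xs. idem (f a) \<Longrightarrow> idem (prod_list (map f xs) :: 'm)"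
  by (induction xs) (auto intro: idem_mult)

lemma prod_list_comm:
  "idem (e::'m) \<Longrightarrow> \<forall>a\<in>set xs. idem (f a) \<Longrightarrow> e * prod_list (map f xs) = prod_list (map f xs) * e"
  using idem_comm idem_prod_list by blast

lemma prod_perm:
  "distinct xs \<Longrightarrow> distinct ys \<Longrightarrow> set xs = set ys \<Longrightarrow> \<forall>a\<in>set xs. idem (f a) \<Longrightarrow>
   prod_list (map f xs) = (prod_list (map f ys) :: 'm)"
proof (induction xs arbitrary: ys)
  case Nil
  then show ?case by simp
next
  case (Cons x xs)
  then have "x \<in> set ys" by auto
  then obtain ys1 ys2 where ys: "ys = ys1 @ x # ys2" by (meson split_list)
  have d: "distinct (ys1 @ ys2)" using Cons.prems(2) ys by auto
  have s: "set xs = set (ys1 @ ys2)" using Cons.prems(1-3) ys by auto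
  have i1: "\<forall>a\<in>set ys1. idem (f a)" using Cons.prems ys by auto
  have ix: "idem (f x)" using Cons.prems by auto
  have "prod_list (map f ys) = prod_list (map f ys1) * (f x * prod_list (map f ys2))"
    using ys by (simp add: mult.assoc)
  also have "\<dots> = f x * (prod_list (map f ys1) * prod_list (map f ys2))"
    using prod_list_comm[OF ix i1] by (simp flip: mult.assoc)
  also have "\<dots> = f x * prod_list (map f (ys1 @ ys2))" by simp
  also have "prod_list (map f (ys1 @ ys2)) = prod_list (map f xs)"
    using Cons.IH[OF _ d s] Cons.prems by auto
  finally show ?case by simp
qed

definition idemOn :: "'a set \<Rightarrow> ('a \<Rightarrow> 'm) \<Rightarrow> bool" where
  "idemOn S f \<longleftrightarrow> (\<forall>s\<in>S. idem (f s))"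

lemma prodE_list:
  assumes "finite S" "distinct xs" "set xs = S" "idemOn S f"
  shows "prodE S f = prod_list (map f xs)"
proof -
  have ex: "\<exists>ys. set ys = S \<and> distinct ys" using assms(1) finite_distinct_list by blast
  define ys where "ys = (SOME ys. set ys = S \<and> distinct ys)"
  have ys: "set ys = S \<and> distinct ys" unfolding ys_def using someI_ex[OF ex] .
  have "prodE S f = prod_list (map f ys)" unfolding prodE_def ys_def ..
  also have "\<dots> = prod_list (map f xs)"
    using prod_perm[of ys xs f] ys assms unfolding idemOn_def by auto
  finally show ?thesis .
qed

lemma prodE_empty[simp]: "prodE {} f = (1::'m)"
  by (subst prodE_list[of "{}" "[]"]) (auto simp: idemOn_def)

lemma prodE_insert:
  assumes "finite S" "a \<notin> S" "idemOn (insert a S) f"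
  shows "prodE (insert a S) f = f a * prodE S f"
proof -
  obtain xs where xs: "set xs = S" "distinct xs" using assms(1) finite_distinct_list by blast
  have "prodE (insert a S) f = prod_list (map f (a # xs))"
    using assms xs by (intro prodE_list) auto
  moreover have "prodE S f = prod_list (map f xs)"
    using assms xs by (intro prodE_list) (auto simp: idemOn_def)
  ultimately show ?thesis by simp
qed

lemma prodE_union:
  assumes "finite A" "finite B" "A \<inter> B = {}" "idemOn (A \<union> B) f"
  shows "prodE (A \<union> B) f = prodE A f * prodE B f"
proof -
  obtain xs where xs: "set xs = A" "distinct xs" using assms(1) finite_distinct_list by blast
  obtain ys where ys: "set ys = B" "distinct ys" using assms(2) finite_distinct_list by blast
  have "prodE (A \<union> B) f = prod_list (map f (xs @ ys))"
    using assms xs ys by (intro prodE_list) auto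
  moreover have "prodE A f = prod_list (map f xs)"
    using assms xs by (intro prodE_list) (auto simp: idemOn_def)
  moreover have "prodE B f = prod_list (map f ys)"
    using assms ys by (intro prodE_list) (auto simp: idemOn_def)
  ultimately show ?thesis by simp
qed

lemma prodE_image:
  assumes "finite S" "inj_on h S" "idemOn (h ` S) f"
  shows "prodE (h ` S) f = prodE S (\<lambda>x. f (h x))"
proof -
  obtain xs where xs: "set xs = S" "distinct xs" using assms(1) finite_distinct_list by blast
  have "prodE (h ` S) f = prod_list (map f (map h xs))"
    using assms xs by (intro prodE_list) (auto simp: distinct_map)
  moreover have "prodE S (\<lambda>x. f (h x)) = prod_list (map (\<lambda>x. f (h x)) xs)"
    using assms xs by (intro prodE_list) (auto simp: idemOn_def)
  ultimately show ?thesis by (simp add: comp_def)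
qed

lemma prodE_cong:
  assumes "finite S" "\<And>s. s \<in> S \<Longrightarrow> f s = g s"
  shows "prodE S f = prodE S g"
proof -
  have ex: "\<exists>ys. set ys = S \<and> distinct ys" using assms(1) finite_distinct_list by blast
  define ys where "ys = (SOME ys. set ys = S \<and> distinct ys)"
  have ys: "set ys = S \<and> distinct ys" unfolding ys_def using someI_ex[OF ex] .
  have "map f ys = map g ys" using ys assms(2) by (intro map_cong) auto
  then show ?thesis unfolding prodE_def ys_def[symmetric] by (simp only:)
qed

lemma idem_prodE:
  assumes "finite S" "idemOn S f" shows "idem (prodE S f)"
proof -
  obtain xs where xs: "set xs = S" "distinct xs" using assms(1) finite_distinct_list by blast
  show ?thesis using prodE_list[OF assms(1) xs(2,1) assms(2)] idem_prod_list[of xs f] assms(2) xs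
    unfolding idemOn_def by auto
qed

lemma prodE_le:
  assumes "finite S" "idemOn S f" "s \<in> S" shows "le (prodE S f) (f s)"
proof -
  have "prodE S f = f s * prodE (S - {s}) f"
    using prodE_insert[of "S - {s}" s f] assms by (simp add: insert_absorb)
  moreover have "idem (prodE (S - {s}) f)" using assms by (intro idem_prodE) (auto simp: idemOn_def)
  moreover have "idem (f s)" using assms by (auto simp: idemOn_def)
  ultimately show ?thesis using le_mult_right by simp
qed

lemma le_prodE:
  assumes "finite S" "idemOn S f" "idem e" "\<And>s. s \<in> S \<Longrightarrow> le e (f s)" shows "le e (prodE S f)"
  using assms
proof (induction S rule: finite_induct)
  case empty
  then show ?case by (simp add: le_one)
next
  case (insert x F)
  have "prodE (insert x F) f = f x * prodE F f"
    using insert by (intro prodE_insert) auto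
  moreover have "le e (prodE F f)" using insert by (auto simp: idemOn_def)
  ultimately show ?case using insert le_mult_I by auto
qed

lemma prodE_mono:
  assumes "finite S" "idemOn S f" "idemOn S g" "\<And>s. s \<in> S \<Longrightarrow> le (f s) (g s)"
  shows "le (prodE S f) (prodE S g)"
  using assms by (intro le_prodE idem_prodE) (auto intro: le_trans prodE_le)

lemma prodE_subset_le:
  assumes "finite B" "A \<subseteq> B" "idemOn B f"
  shows "le (prodE B f) (prodE A f)"
proof -
  have "finite A" using assms finite_subset by blast
  then show ?thesis using assms
    by (intro le_prodE idem_prodE) (auto intro: prodE_le simp: idemOn_def)
qed


lemma idem_prodE_all: "(\<And>x. idem (f x)) \<Longrightarrow> idem (prodE S f :: 'm)"
  unfolding prodE_def by (rule idem_prod_list) auto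

lemma le_mult_mono: "idem (a::'m) \<Longrightarrow> idem b \<Longrightarrow> idem c \<Longrightarrow> idem d \<Longrightarrow> le a c \<Longrightarrow> le b d \<Longrightarrow> le (a * b) (c * d)"
  by (meson idem_mult le_mult_I le_mult_left le_mult_right le_trans)

lemma tauF_idem[simp]: "idem (tauF chi X n v P :: 'm)"
  by (cases n) (auto intro!: idem_mult idem_prodE_all)

declare tauF.simps(2)[simp del]

abbreviation outS where "outS X v P \<equiv> {e\<in>tedges X. tsrc X e = v \<and> e \<notin> P}"
abbreviation inS where "inS X v P \<equiv> {e\<in>tedges X. ttgt X e = v \<and> e \<notin> P}"

lemma idemOn_aplus[simp]: "idemOn S (\<lambda>e. aplus (f e))" by (simp add: idemOn_def)
lemma idemOn_astar[simp]: "idemOn S (\<lambda>e. astar (f e))" by (simp add: idemOn_def)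

lemma tauF_antitone1:
  assumes fin: "finite (tedges X)"
  shows "le (tauF chi X (Suc n) v P) (tauF chi X n v P :: 'm)"
proof (induction n arbitrary: v P)
  case 0
  then show ?case by (simp add: le_one)
next
  case (Suc n)
  have e1: "tauF chi X (Suc (Suc n)) v P =
    prodE (outS X v P) (\<lambda>e. aplus (chi (tlab X e) * tauF chi X (Suc n) (ttgt X e) {e})) *
    prodE (inS X v P) (\<lambda>e. astar (tauF chi X (Suc n) (tsrc X e) {e} * chi (tlab X e)))"
    by (rule tauF.simps(2))
  have e2: "tauF chi X (Suc n) v P =
    prodE (outS X v P) (\<lambda>e. aplus (chi (tlab X e) * tauF chi X n (ttgt X e) {e})) *
    prodE (inS X v P) (\<lambda>e. astar (tauF chi X n (tsrc X e) {e} * chi (tlab X e)))"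
    by (rule tauF.simps(2))
  show ?case
    unfolding e1 e2
  proof (rule le_mult_mono)
    show "le (prodE (outS X v P) (\<lambda>e. aplus (chi (tlab X e) * tauF chi X (Suc n) (ttgt X e) {e})))
              (prodE (outS X v P) (\<lambda>e. aplus (chi (tlab X e) * tauF chi X n (ttgt X e) {e})))"
      using fin by (auto intro!: prodE_mono aplus_mono Suc simp del: tauF.simps)
    show "le (prodE (inS X v P) (\<lambda>e. astar (tauF chi X (Suc n) (tsrc X e) {e} * chi (tlab X e))))
              (prodE (inS X v P) (\<lambda>e. astar (tauF chi X n (tsrc X e) {e} * chi (tlab X e))))"
      using fin by (auto intro!: prodE_mono astar_mono Suc simp del: tauF.simps)
  qed (auto intro: idem_prodE_all)
qed

lemma tauF_antitone:
  assumes fin: "finite (tedges X)" and nm: "n \<le> m"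
  shows "le (tauF chi X m v P) (tauF chi X n v P :: 'm)"
  using nm
proof (induction m rule: dec_induct)
  case base
  then show ?case by (simp add: le_refl)
next
  case (step m)
  then show ?case using tauF_antitone1[OF fin, of chi m v P] le_trans by blast
qed

lemma tauF_local:
  assumes "\<And>e. e \<in> tedges X \<Longrightarrow> tsrc X e = v \<or> ttgt X e = v \<Longrightarrow> (e \<in> P \<longleftrightarrow> e \<in> P')"
  shows "tauF chi X n v P = (tauF chi X n v P' :: 'm)"
proof (cases n)
  case 0
  then show ?thesis by simp
next
  case (Suc k)
  have "outS X v P = outS X v P'" "inS X v P = inS X v P'" using assms by auto
  then show ?thesis using Suc by (simp add: tauF.simps(2))
qed

definition gmorph :: "('v, 'e, 's) stree \<Rightarrow> ('w, 'f, 's) stree \<Rightarrow> ('v \<Rightarrow> 'w) \<Rightarrow> ('e \<Rightarrow> 'f) \<Rightarrow> bool" where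
  "gmorph X Y fv fe \<longleftrightarrow> (\<forall>e\<in>tedges X. fe e \<in> tedges Y \<and> tsrc Y (fe e) = fv (tsrc X e) \<and>
      ttgt Y (fe e) = fv (ttgt X e) \<and> tlab Y (fe e) = tlab X e)"

definition noloops :: "('v, 'e, 's) stree \<Rightarrow> bool" where
  "noloops Y \<longleftrightarrow> (\<forall>g\<in>tedges Y. tsrc Y g \<noteq> ttgt Y g)"

lemma comm3: "idem (A::'m) \<Longrightarrow> idem B \<Longrightarrow> A * (B * C) = B * (A * C)"
proof -
  assume "idem A" "idem B"
  then have "A * B = B * A" by (rule idem_comm)
  then show ?thesis by (metis mult.assoc)
qed

lemma tauF_split_out:
  assumes fin: "finite (tedges Y)" and g: "g \<in> tedges Y" "tsrc Y g = w" "g \<notin> P"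
    and nl: "ttgt Y g \<noteq> w"
  shows "tauF chi Y (Suc n) w P =
     aplus (chi (tlab Y g) * tauF chi Y n (ttgt Y g) {g}) * (tauF chi Y (Suc n) w (insert g P) :: 'm)"
proof -
  have o: "outS Y w P = insert g (outS Y w (insert g P))" using g by auto
  have i: "inS Y w P = inS Y w (insert g P)" using g nl by auto
  have 1: "prodE (outS Y w P) (\<lambda>e. aplus (chi (tlab Y e) * tauF chi Y n (ttgt Y e) {e})) =
     aplus (chi (tlab Y g) * tauF chi Y n (ttgt Y g) {g}) *
     prodE (outS Y w (insert g P)) (\<lambda>e. aplus (chi (tlab Y e) * tauF chi Y n (ttgt Y e) {e}))"
    unfolding o using fin by (intro prodE_insert) auto
  have "tauF chi Y (Suc n) w P = prodE (outS Y w P) (\<lambda>e. aplus (chi (tlab Y e) * tauF chi Y n (ttgt Y e) {e})) *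
    prodE (inS Y w P) (\<lambda>e. astar (tauF chi Y n (tsrc Y e) {e} * chi (tlab Y e)))"
    by (rule tauF.simps(2))
  also have "\<dots> = aplus (chi (tlab Y g) * tauF chi Y n (ttgt Y g) {g}) *
     (prodE (outS Y w (insert g P)) (\<lambda>e. aplus (chi (tlab Y e) * tauF chi Y n (ttgt Y e) {e})) *
     prodE (inS Y w (insert g P)) (\<lambda>e. astar (tauF chi Y n (tsrc Y e) {e} * chi (tlab Y e))))"
    unfolding 1 i by (simp only: mult.assoc)
  also have "(prodE (outS Y w (insert g P)) (\<lambda>e. aplus (chi (tlab Y e) * tauF chi Y n (ttgt Y e) {e})) *
     prodE (inS Y w (insert g P)) (\<lambda>e. astar (tauF chi Y n (tsrc Y e) {e} * chi (tlab Y e)))) =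
     tauF chi Y (Suc n) w (insert g P)"
    by (rule tauF.simps(2)[symmetric])
  finally show ?thesis .
qed

lemma tauF_split_in:
  assumes fin: "finite (tedges Y)" and g: "g \<in> tedges Y" "ttgt Y g = w" "g \<notin> P"
    and nl: "tsrc Y g \<noteq> w"
  shows "tauF chi Y (Suc n) w P =
     astar (tauF chi Y n (tsrc Y g) {g} * chi (tlab Y g)) * (tauF chi Y (Suc n) w (insert g P) :: 'm)"
proof -
  have o: "outS Y w P = outS Y w (insert g P)" using g nl by auto
  have i: "inS Y w P = insert g (inS Y w (insert g P))" using g by auto
  have 1: "prodE (inS Y w P) (\<lambda>e. astar (tauF chi Y n (tsrc Y e) {e} * chi (tlab Y e))) =
     astar (tauF chi Y n (tsrc Y g) {g} * chi (tlab Y g)) *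
     prodE (inS Y w (insert g P)) (\<lambda>e. astar (tauF chi Y n (tsrc Y e) {e} * chi (tlab Y e)))"
    unfolding i using fin by (intro prodE_insert) auto
  have "tauF chi Y (Suc n) w P = prodE (outS Y w P) (\<lambda>e. aplus (chi (tlab Y e) * tauF chi Y n (ttgt Y e) {e})) *
    prodE (inS Y w P) (\<lambda>e. astar (tauF chi Y n (tsrc Y e) {e} * chi (tlab Y e)))"
    by (rule tauF.simps(2))
  also have "\<dots> = prodE (outS Y w (insert g P)) (\<lambda>e. aplus (chi (tlab Y e) * tauF chi Y n (ttgt Y e) {e})) *
     (astar (tauF chi Y n (tsrc Y g) {g} * chi (tlab Y g)) *
     prodE (inS Y w (insert g P)) (\<lambda>e. astar (tauF chi Y n (tsrc Y e) {e} * chi (tlab Y e))))"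
    unfolding 1 o ..
  also have "\<dots> = astar (tauF chi Y n (tsrc Y g) {g} * chi (tlab Y g)) *
     (prodE (outS Y w (insert g P)) (\<lambda>e. aplus (chi (tlab Y e) * tauF chi Y n (ttgt Y e) {e})) *
     prodE (inS Y w (insert g P)) (\<lambda>e. astar (tauF chi Y n (tsrc Y e) {e} * chi (tlab Y e))))"
    by (rule comm3) (auto intro: idem_prodE_all)
  also have "(prodE (outS Y w (insert g P)) (\<lambda>e. aplus (chi (tlab Y e) * tauF chi Y n (ttgt Y e) {e})) *
     prodE (inS Y w (insert g P)) (\<lambda>e. astar (tauF chi Y n (tsrc Y e) {e} * chi (tlab Y e)))) =
     tauF chi Y (Suc n) w (insert g P)"
    by (rule tauF.simps(2)[symmetric])
  finally show ?thesis .
qed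

lemma tauF_le_insert:
  assumes fin: "finite (tedges Y)"
  shows "le (tauF chi Y n w P) (tauF chi Y n w (insert g P) :: 'm)"
proof (cases n)
  case 0 then show ?thesis by (simp add: le_one)
next
  case (Suc k)
  have e: "\<And>Q. tauF chi Y (Suc k) w Q =
    prodE (outS Y w Q) (\<lambda>e. aplus (chi (tlab Y e) * tauF chi Y k (ttgt Y e) {e})) *
    prodE (inS Y w Q) (\<lambda>e. astar (tauF chi Y k (tsrc Y e) {e} * chi (tlab Y e)))"
    by (rule tauF.simps(2))
  show ?thesis unfolding Suc e
    using fin by (intro le_mult_mono prodE_subset_le idem_prodE_all) auto
qed


lemma morph_le:
  assumes finX: "finite (tedges X)" and finY: "finite (tedges Y)" and m: "gmorph X Y fv fe"
    and nl: "noloops Y"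
  shows "n \<le> M \<Longrightarrow> le (tauF chi Y M (fv v) {}) (tauF chi X n v P :: 'm)"
proof (induction n arbitrary: M v P)
  case 0
  then show ?case by (simp add: le_one)
next
  case (Suc n)
  obtain M' where M: "M = Suc M'" using Suc.prems by (cases M) auto
  have nM: "n \<le> M'" using Suc.prems M by simp
  define yv where "yv = tauF chi Y (Suc M') (fv v) {}"
  have eX: "tauF chi X (Suc n) v P =
    prodE (outS X v P) (\<lambda>e. aplus (chi (tlab X e) * tauF chi X n (ttgt X e) {e})) *
    prodE (inS X v P) (\<lambda>e. astar (tauF chi X n (tsrc X e) {e} * chi (tlab X e)))"
    by (rule tauF.simps(2))
  have out: "le yv (aplus (chi (tlab X e) * tauF chi X n (ttgt X e) {e}))" if e: "e \<in> outS X v P" for e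
  proof -
    define g where "g = fe e"
    have g: "g \<in> tedges Y" "tsrc Y g = fv v" "ttgt Y g = fv (ttgt X e)" "tlab Y g = tlab X e"
      using m e unfolding gmorph_def g_def by auto
    have gnl: "ttgt Y g \<noteq> fv v" using nl g unfolding noloops_def by auto
    define x where "x = chi (tlab X e)"
    define s where "s = tauF chi Y (Suc M') (fv v) {g}"
    have yv: "yv = aplus (x * tauF chi Y M' (ttgt Y g) {g}) * s"
      unfolding yv_def s_def x_def using tauF_split_out[OF finY g(1,2) _ gnl, of "{}" chi M'] g(4) by simp
    show ?thesis
    proof (cases M')
      case 0
      then have "n = 0" using nM by simp
      have iss: "idem s" unfolding s_def by (rule tauF_idem)
      show ?thesis using yv 0 \<open>n = 0\<close> iss
        by (simp del: tauF.simps add: tauF.simps(1) le_mult_right x_def)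
    next
      case (Suc M'')
      define u where "u = ttgt Y g"
      define t where "t = tauF chi Y M' u {g}"
      define s' where "s' = tauF chi Y M'' (fv v) {g}"
      define X' where "X' = tauF chi X n (ttgt X e) {e}"
      have IH: "le (tauF chi Y M' u {}) X'"
        unfolding u_def X'_def g(3) by (rule Suc.IH[OF nM])
      have ug: "tsrc Y g \<noteq> u" using gnl g unfolding u_def by simp
      have sp: "tauF chi Y M' u {} = astar (s' * x) * t"
        unfolding Suc t_def s'_def x_def
        using tauF_split_in[OF finY g(1) u_def[symmetric] _ ug, of "{}" chi M''] g by simp
      have ss': "le s s'" unfolding s_def s'_def Suc by (rule tauF_antitone[OF finY]) simp
      have h: "le (t * astar (s' * x)) X'"
        using IH sp idem_comm[of t "astar (s' * x)"] unfolding t_def by simp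
      have "le (s * aplus (x * t)) (aplus (x * X'))"
        by (rule keyK[OF _ _ _ _ ss' h]) (auto simp: s_def s'_def t_def X'_def)
      moreover have "yv = s * aplus (x * t)"
        using yv idem_comm[of s "aplus (x * t)"] unfolding t_def u_def s_def by simp
      ultimately show ?thesis unfolding X'_def x_def by simp
    qed
  qed
  have inn: "le yv (astar (tauF chi X n (tsrc X e) {e} * chi (tlab X e)))" if e: "e \<in> inS X v P" for e
  proof -
    define g where "g = fe e"
    have g: "g \<in> tedges Y" "ttgt Y g = fv v" "tsrc Y g = fv (tsrc X e)" "tlab Y g = tlab X e"
      using m e unfolding gmorph_def g_def by auto
    have gnl: "tsrc Y g \<noteq> fv v" using nl g unfolding noloops_def by auto
    define x where "x = chi (tlab X e)"
    define s where "s = tauF chi Y (Suc M') (fv v) {g}"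
    have yv: "yv = astar (tauF chi Y M' (tsrc Y g) {g} * x) * s"
      unfolding yv_def s_def x_def using tauF_split_in[OF finY g(1,2) _ gnl, of "{}" chi M'] g(4) by simp
    show ?thesis
    proof (cases M')
      case 0
      then have "n = 0" using nM by simp
      have iss: "idem s" unfolding s_def by (rule tauF_idem)
      show ?thesis using yv 0 \<open>n = 0\<close> iss
        by (simp del: tauF.simps add: tauF.simps(1) le_mult_right x_def)
    next
      case (Suc M'')
      define u where "u = tsrc Y g"
      define t where "t = tauF chi Y M' u {g}"
      define s' where "s' = tauF chi Y M'' (fv v) {g}"
      define X' where "X' = tauF chi X n (tsrc X e) {e}"
      have IH: "le (tauF chi Y M' u {}) X'"
        unfolding u_def X'_def g(3) by (rule Suc.IH[OF nM])
      have ug: "ttgt Y g \<noteq> u" using gnl g unfolding u_def by simp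
      have sp: "tauF chi Y M' u {} = aplus (x * s') * t"
        unfolding Suc t_def s'_def x_def
        using tauF_split_out[OF finY g(1) u_def[symmetric] _ ug, of "{}" chi M''] g by simp
      have ss': "le s s'" unfolding s_def s'_def Suc by (rule tauF_antitone[OF finY]) simp
      have h: "le (t * aplus (x * s')) X'"
        using IH sp idem_comm[of t "aplus (x * s')"] unfolding t_def by simp
      have "le (s * astar (t * x)) (astar (X' * x))"
        by (rule keyK'[OF _ _ _ _ ss' h]) (auto simp: s_def s'_def t_def X'_def)
      moreover have "yv = s * astar (t * x)"
        using yv idem_comm[of s "astar (t * x)"] unfolding t_def u_def s_def by simp
      ultimately show ?thesis unfolding X'_def x_def by simp
    qed
  qed
  have iy: "idem yv" unfolding yv_def by simp
  show ?case unfolding M eX yv_def[symmetric]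
    using finX out inn iy
    by (intro le_mult_I le_prodE) (auto simp del: tauF.simps)
qed


section \<open>Walks\<close>

definition oth :: "('v, 'e, 's) stree \<Rightarrow> 'e \<Rightarrow> 'v \<Rightarrow> 'v" where
  "oth X e u = (if tsrc X e = u then ttgt X e else tsrc X e)"

fun uwalk :: "('v, 'e, 's) stree \<Rightarrow> 'v \<Rightarrow> 'e list \<Rightarrow> 'v \<Rightarrow> bool" where
  "uwalk X u [] w \<longleftrightarrow> u = w"
| "uwalk X u (e # es) w \<longleftrightarrow> e \<in> tedges X \<and> (tsrc X e = u \<or> ttgt X e = u) \<and> uwalk X (oth X e u) es w"

fun wverts :: "('v, 'e, 's) stree \<Rightarrow> 'v \<Rightarrow> 'e list \<Rightarrow> 'v list" where
  "wverts X u [] = [u]"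
| "wverts X u (e # es) = u # wverts X (oth X e u) es"

definition nbP :: "'e set \<Rightarrow> 'e list \<Rightarrow> bool" where
  "nbP P es \<longleftrightarrow> (es = [] \<or> hd es \<notin> P) \<and> successively (\<noteq>) es"

definition delE :: "('v, 'e, 's) stree \<Rightarrow> 'e \<Rightarrow> ('v, 'e, 's) stree" where
  "delE X e = X\<lparr>tedges := tedges X - {e}\<rparr>"

definition acyc :: "('v, 'e, 's) stree \<Rightarrow> bool" where
  "acyc X \<longleftrightarrow> (\<forall>e\<in>tedges X. (tsrc X e, ttgt X e) \<notin> (undir_adj (delE X e))\<^sup>*)"

lemma nbP_Nil[simp]: "nbP P []" by (simp add: nbP_def)

lemma nbP_Cons[simp]: "nbP P (e # es) \<longleftrightarrow> e \<notin> P \<and> nbP {e} es"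
  by (cases es) (auto simp: nbP_def successively_Cons)

lemma nbP_empty: "nbP P es \<Longrightarrow> nbP {} es"
  by (cases es) auto

lemma uwalk_append: "uwalk X u (xs @ ys) w \<longleftrightarrow> (\<exists>m. uwalk X u xs m \<and> uwalk X m ys w)"
  by (induction xs arbitrary: u) auto

lemma wverts_length[simp]: "length (wverts X u es) = Suc (length es)"
  by (induction es arbitrary: u) auto

lemma wverts_hd: "wverts X u es ! 0 = u"
  by (cases es) auto

lemma wverts_last: "uwalk X u es w \<Longrightarrow> wverts X u es ! length es = w"
  by (induction es arbitrary: u) auto

lemma wverts_take: "k \<le> length es \<Longrightarrow> wverts X u (take k es) = take (Suc k) (wverts X u es)"
proof (induction es arbitrary: u k)
  case Nil
  then show ?case by simp
next
  case (Cons e es)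
  then show ?case by (cases k) auto
qed

lemma uwalk_take: "uwalk X u es w \<Longrightarrow> k \<le> length es \<Longrightarrow> uwalk X u (take k es) (wverts X u es ! k)"
proof (induction es arbitrary: u k)
  case Nil
  then show ?case by simp
next
  case (Cons e es)
  then show ?case by (cases k) auto
qed

lemma uwalk_drop: "uwalk X u es w \<Longrightarrow> k \<le> length es \<Longrightarrow> uwalk X (wverts X u es ! k) (drop k es) w"
proof (induction es arbitrary: u k)
  case Nil
  then show ?case by simp
next
  case (Cons e es)
  then show ?case by (cases k) auto
qed

lemma oth_ends: "tsrc X e = u \<or> ttgt X e = u \<Longrightarrow> {tsrc X e, ttgt X e} = {u, oth X e u}"
  unfolding oth_def by auto

lemma uwalk_edge_ends:
  "uwalk X u es w \<Longrightarrow> j < length es \<Longrightarrow>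
   {tsrc X (es ! j), ttgt X (es ! j)} = {wverts X u es ! j, wverts X u es ! Suc j}"
proof (induction es arbitrary: u j)
  case Nil
  then show ?case by simp
next
  case (Cons e es)
  show ?case
  proof (cases j)
    case 0
    then show ?thesis using Cons.prems oth_ends[of X e u] by (cases es) auto
  next
    case (Suc j')
    then show ?thesis using Cons by auto
  qed
qed

lemma uwalk_edges: "uwalk X u es w \<Longrightarrow> set es \<subseteq> tedges X"
  by (induction es arbitrary: u) auto

lemma undir_adjI: "f \<in> tedges Z \<Longrightarrow> (tsrc Z f, ttgt Z f) \<in> undir_adj Z \<and> (ttgt Z f, tsrc Z f) \<in> undir_adj Z"
  unfolding undir_adj_def by blast

lemma uwalk_rtrancl:
  "uwalk X u es w \<Longrightarrow> e \<notin> set es \<Longrightarrow> (u, w) \<in> (undir_adj (delE X e))\<^sup>*"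
proof (induction es arbitrary: u)
  case Nil
  then show ?case by simp
next
  case (Cons f es)
  have f: "f \<in> tedges (delE X e)" "tsrc X f = u \<or> ttgt X f = u"
    using Cons.prems by (auto simp: delE_def)
  have "(u, oth X f u) \<in> undir_adj (delE X e)"
    using undir_adjI[OF f(1)] f(2) by (auto simp add: delE_def oth_def)
  moreover have "(oth X f u, w) \<in> (undir_adj (delE X e))\<^sup>*" using Cons by simp
  ultimately show ?case by (rule converse_rtrancl_into_rtrancl)
qed

lemma sym_undir_adj: "sym (undir_adj X)"
  unfolding undir_adj_def sym_def by blast

lemma rtrancl_undir_sym: "(a, b) \<in> (undir_adj X)\<^sup>* \<Longrightarrow> (b, a) \<in> (undir_adj X)\<^sup>*"
  by (rule symD[OF sym_rtrancl[OF sym_undir_adj]])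

lemma acyc_noloops: "acyc X \<Longrightarrow> noloops X"
  unfolding acyc_def noloops_def by (metis rtrancl.rtrancl_refl)

lemma acyc_conn:
  assumes "acyc X" "e \<in> tedges X" "{tsrc X e, ttgt X e} = {a, b}"
    "(a, b) \<in> (undir_adj (delE X e))\<^sup>*"
  shows False
proof -
  have n: "(tsrc X e, ttgt X e) \<notin> (undir_adj (delE X e))\<^sup>*"
    using assms(1,2) unfolding acyc_def by blast
  have "(tsrc X e = a \<and> ttgt X e = b) \<or> (tsrc X e = b \<and> ttgt X e = a)"
    using assms(3) by (rule doubleton_eq_iff[THEN iffD1])
  then show False
  proof
    assume "tsrc X e = a \<and> ttgt X e = b"
    then show False using n assms(4) by simp
  next
    assume "tsrc X e = b \<and> ttgt X e = a"
    then show False using n rtrancl_undir_sym[OF assms(4)] by simp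
  qed
qed

lemma oth_ne:
  "noloops X \<Longrightarrow> e \<in> tedges X \<Longrightarrow> tsrc X e = u \<or> ttgt X e = u \<Longrightarrow> oth X e u \<noteq> u"
  unfolding noloops_def oth_def by (cases "tsrc X e = u") auto

lemma walk_distinct:
  assumes ac: "acyc X"
  shows "uwalk X u es w \<Longrightarrow> nbP P es \<Longrightarrow> distinct (wverts X u es)"
proof (induction es arbitrary: u P)
  case Nil
  then show ?case by simp
next
  case (Cons e es)
  define u' where "u' = oth X e u"
  have e: "e \<in> tedges X" "tsrc X e = u \<or> ttgt X e = u" and w: "uwalk X u' es w"
    using Cons.prems unfolding u'_def by auto
  have nb: "nbP {e} es" using Cons.prems by simp
  have d: "distinct (wverts X u' es)" using Cons.IH[OF w nb] .
  have uu: "u' \<noteq> u" unfolding u'_def using oth_ne[OF acyc_noloops[OF ac] e] .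
  have ends: "{tsrc X e, ttgt X e} = {u, u'}" unfolding u'_def using oth_ends[OF e(2)] .
  have "u \<notin> set (wverts X u' es)"
  proof
    assume "u \<in> set (wverts X u' es)"
    then obtain k where k: "k < Suc (length es)" "wverts X u' es ! k = u"
      by (auto simp: in_set_conv_nth)
    have kl: "k \<le> length es" using k by simp
    define p where "p = take k es"
    have wp: "uwalk X u' p u" unfolding p_def using uwalk_take[OF w kl] k by simp
    have vp: "wverts X u' p = take (Suc k) (wverts X u' es)" unfolding p_def by (rule wverts_take[OF kl])
    have dp: "distinct (wverts X u' p)" using d vp by simp
    have lp: "length p = k" unfolding p_def using kl by simp
    have vp0: "wverts X u' p ! 0 = u'" by (rule wverts_hd)
    have vpk: "wverts X u' p ! k = u" using wverts_last[OF wp] lp by simp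
    show False
    proof (cases "e \<in> set p")
      case True
      then obtain j where j: "j < k" "p ! j = e" using lp by (auto simp: in_set_conv_nth)
      have ej: "{u, u'} = {wverts X u' p ! j, wverts X u' p ! Suc j}"
        using uwalk_edge_ends[OF wp, of j] j lp ends by simp
      have len: "length (wverts X u' p) = Suc k" using lp by simp
      have "wverts X u' p ! j = u \<or> wverts X u' p ! j = u'" using ej by blast
      then have j0: "j = 0"
        using nth_eq_iff_index_eq[OF dp, of j k] nth_eq_iff_index_eq[OF dp, of j 0] vp0 vpk j len by auto
      have "wverts X u' p ! Suc 0 = u \<or> wverts X u' p ! Suc 0 = u'" using ej j0 by blast
      then have "Suc 0 = k"
        using nth_eq_iff_index_eq[OF dp, of "Suc 0" k] nth_eq_iff_index_eq[OF dp, of "Suc 0" 0] vp0 vpk j j0 len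
        by auto
      then have "es ! 0 = e" using j j0 unfolding p_def by simp
      moreover have "es \<noteq> []" using kl \<open>Suc 0 = k\<close> by auto
      ultimately show False using nb by (cases es) auto
    next
      case False
      have "(u', u) \<in> (undir_adj (delE X e))\<^sup>*" using uwalk_rtrancl[OF wp False] .
      then have "(u, u') \<in> (undir_adj (delE X e))\<^sup>*" by (rule rtrancl_undir_sym)
      then show False by (rule acyc_conn[OF ac e(1) ends])
    qed
  qed
  then show ?case using d unfolding u'_def by simp
qed

lemma walk_unique:
  assumes ac: "acyc X"
  shows "uwalk X u p w \<Longrightarrow> uwalk X u q w \<Longrightarrow> nbP {} p \<Longrightarrow> nbP {} q \<Longrightarrow> p = q"
proof (induction p arbitrary: u q)
  case Nil
  show ?case
  proof (cases q)
    case Nil then show ?thesis by simp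
  next
    case (Cons f q')
    have d: "distinct (wverts X u q)" using walk_distinct[OF ac Nil(2,4)] .
    have "wverts X u q ! length q = u" using wverts_last[OF Nil(2)] Nil(1) by simp
    moreover have "wverts X u q ! 0 = u" by (rule wverts_hd)
    moreover have "length q \<noteq> 0" using Cons by simp
    ultimately show ?thesis using nth_eq_iff_index_eq[OF d, of 0 "length q"] by simp
  qed
next
  case (Cons e p')
  show ?case
  proof (cases "q = []")
    case True
    have d: "distinct (wverts X u (e # p'))" using walk_distinct[OF ac Cons(2,4)] .
    have "wverts X u (e # p') ! length (e # p') = u" using wverts_last[OF Cons(2)] Cons(3) True by simp
    moreover have "wverts X u (e # p') ! 0 = u" by (rule wverts_hd)
    ultimately show ?thesis using nth_eq_iff_index_eq[OF d, of 0 "length (e # p')"] by simp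
  next
    case False
    then obtain f q' where Cons2: "q = f # q'" by (cases q) auto
    show ?thesis
    proof (cases "e = f")
      case True
      have "p' = q'"
        using Cons.IH[of "oth X e u" q'] Cons.prems Cons2 True nbP_empty by auto
      then show ?thesis using True Cons2 by simp
    next
      case False
      have e: "e \<in> tedges X" "tsrc X e = u \<or> ttgt X e = u" using Cons.prems by auto
      have dp: "distinct (wverts X u (e # p'))" using walk_distinct[OF ac Cons.prems(1,3)] .
      have dq: "distinct (wverts X u q)" using walk_distinct[OF ac Cons.prems(2,4)] .
      have wp': "uwalk X (oth X e u) p' w" using Cons.prems by simp
      have enp: "e \<notin> set p'"
      proof
        assume "e \<in> set p'"
        then obtain j where j: "j < length p'" "p' ! j = e" by (auto simp: in_set_conv_nth)
        have "{tsrc X e, ttgt X e} = {wverts X (oth X e u) p' ! j, wverts X (oth X e u) p' ! Suc j}"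
          using uwalk_edge_ends[OF wp' j(1)] j by simp
        then have "u = wverts X (oth X e u) p' ! j \<or> u = wverts X (oth X e u) p' ! Suc j"
          using e(2) by blast
        moreover have "wverts X (oth X e u) p' ! j \<in> set (wverts X (oth X e u) p')"
          using j(1) by (intro nth_mem) simp
        moreover have "wverts X (oth X e u) p' ! Suc j \<in> set (wverts X (oth X e u) p')"
          using j(1) by (intro nth_mem) simp
        ultimately show False using dp by auto
      qed
      have wq': "uwalk X (oth X f u) q' w" using Cons.prems Cons2 by simp
      have enq: "e \<notin> set q"
      proof
        assume "e \<in> set q"
        then have "e \<in> set q'" using Cons2 False by simp
        then obtain j where j: "j < length q'" "q' ! j = e" by (auto simp: in_set_conv_nth)
        have "{tsrc X e, ttgt X e} = {wverts X (oth X f u) q' ! j, wverts X (oth X f u) q' ! Suc j}"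
          using uwalk_edge_ends[OF wq' j(1)] j by simp
        then have "u = wverts X (oth X f u) q' ! j \<or> u = wverts X (oth X f u) q' ! Suc j"
          using e(2) by blast
        moreover have "wverts X (oth X f u) q' ! j \<in> set (wverts X (oth X f u) q')"
          using j(1) by (intro nth_mem) simp
        moreover have "wverts X (oth X f u) q' ! Suc j \<in> set (wverts X (oth X f u) q')"
          using j(1) by (intro nth_mem) simp
        ultimately show False using dq Cons2 by auto
      qed
      have r1: "(oth X e u, w) \<in> (undir_adj (delE X e))\<^sup>*" using uwalk_rtrancl[OF wp' enp] .
      have r2: "(u, w) \<in> (undir_adj (delE X e))\<^sup>*" using uwalk_rtrancl[OF Cons.prems(2) enq] .
      have "(oth X e u, u) \<in> (undir_adj (delE X e))\<^sup>*"
        using r1 rtrancl_undir_sym[OF r2] by (rule rtrancl_trans)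
      then have "(u, oth X e u) \<in> (undir_adj (delE X e))\<^sup>*" by (rule rtrancl_undir_sym)
      then have False by (rule acyc_conn[OF ac e(1) oth_ends[OF e(2)]])
      then show ?thesis ..
    qed
  qed
qed


lemma nbP_empty_rev: "nbP {} (rev es) \<longleftrightarrow> nbP {} es"
proof -
  have eq: "(\<lambda>x y. y \<noteq> x) = ((\<noteq>) :: 'e \<Rightarrow> 'e \<Rightarrow> bool)" by (auto simp: fun_eq_iff)
  have "successively (\<lambda>x y. y \<noteq> x) es = successively (\<noteq>) es" by (simp only: eq)
  then show ?thesis by (simp add: nbP_def)
qed

lemma uwalk_single_rev: "uwalk X u [e] w \<Longrightarrow> uwalk X w [e] u"
  by (auto simp: oth_def)

lemma uwalk_rev: "uwalk X u es w \<Longrightarrow> uwalk X w (rev es) u"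
proof (induction es arbitrary: u)
  case Nil
  then show ?case by simp
next
  case (Cons e es)
  have 1: "uwalk X u [e] (oth X e u)" using Cons.prems by simp
  have 2: "uwalk X (oth X e u) es w" using Cons.prems by simp
  have "uwalk X w (rev es) (oth X e u)" using Cons.IH[OF 2] .
  moreover have "uwalk X (oth X e u) [e] u" using uwalk_single_rev[OF 1] .
  ultimately show ?case by (auto simp: uwalk_append)
qed

lemma dpath_uwalk: "is_dpath X u es w \<Longrightarrow> uwalk X u es w"
  by (induction es arbitrary: u) (auto simp: oth_def)

lemma dpath_wverts: "is_dpath X u es w \<Longrightarrow> wverts X u es = u # map (ttgt X) es"
  by (induction es arbitrary: u) (auto simp: oth_def)

lemma dpath_nbP: "noloops X \<Longrightarrow> is_dpath X u es w \<Longrightarrow> nbP {} es"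
proof (induction es arbitrary: u)
  case Nil
  then show ?case by simp
next
  case (Cons e es)
  have "nbP {} es" using Cons by auto
  moreover have "es = [] \<or> hd es \<noteq> e"
    using Cons.prems unfolding noloops_def by (cases es) auto
  ultimately show ?case by (cases es) (auto simp: nbP_def successively_Cons)
qed

lemma dpath_append: "is_dpath X u (xs @ ys) w \<longleftrightarrow> (\<exists>m. is_dpath X u xs m \<and> is_dpath X m ys w)"
  by (induction xs arbitrary: u) auto

lemma dpath_unique:
  "acyc X \<Longrightarrow> is_dpath X u es w \<Longrightarrow> is_dpath X u es' w \<Longrightarrow> es = es'"
  using walk_unique dpath_uwalk dpath_nbP acyc_noloops by metis

lemma trunk_eq: "acyc X \<Longrightarrow> is_dpath X (tstart X) es (tend X) \<Longrightarrow> trunk X = es"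
  unfolding trunk_def using dpath_unique by (metis (no_types, lifting) the_equality)

section \<open>Spanning\<close>

lemma undir_adjE: "(a, b) \<in> undir_adj X \<Longrightarrow>
  \<exists>e\<in>tedges X. (tsrc X e = a \<and> ttgt X e = b) \<or> (tsrc X e = b \<and> ttgt X e = a)"
  unfolding undir_adj_def by blast

lemma spanning:
  assumes finV: "finite (tverts X)" and finE: "finite (tedges X)"
    and v0: "v0 \<in> tverts X" and conn: "\<forall>w\<in>tverts X. (v0, w) \<in> (undir_adj X)\<^sup>*"
  shows "card (tverts X) \<le> Suc (card (tedges X))"
proof -
  define r where "r = undir_adj X"
  define d where "d w = (LEAST k. (v0, w) \<in> r ^^ k)" for w
  have ex: "\<exists>k. (v0, w) \<in> r ^^ k" if "w \<in> tverts X" for w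
    using conn that rtrancl_power unfolding r_def by blast
  have dI: "(v0, w) \<in> r ^^ d w" if "w \<in> tverts X" for w
    unfolding d_def using ex[OF that] by (rule LeastI_ex)
  have dle: "d w \<le> k" if "(v0, w) \<in> r ^^ k" for w k
    unfolding d_def using that by (rule Least_le)
  define P where "P w e \<longleftrightarrow> e \<in> tedges X \<and> (\<exists>w'. Suc (d w') = d w \<and>
      ((tsrc X e = w' \<and> ttgt X e = w) \<or> (tsrc X e = w \<and> ttgt X e = w')))" for w e
  have exP: "\<exists>e. P w e" if w: "w \<in> tverts X - {v0}" for w
  proof -
    have "d w \<noteq> 0"
    proof
      assume "d w = 0"
      then have "(v0, w) \<in> r ^^ 0" using dI w by fastforce
      then show False using w by simp
    qed
    then obtain k where k: "d w = Suc k" by (cases "d w") auto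
    have "(v0, w) \<in> r ^^ Suc k" using dI w k by fastforce
    then obtain w' where w': "(v0, w') \<in> r ^^ k" "(w', w) \<in> r" by (rule relpow_Suc_E)
    have "d w' \<le> k" using dle[OF w'(1)] .
    moreover have "d w \<le> Suc (d w')"
    proof -
      have "(v0, w') \<in> r ^^ d w'" unfolding d_def using w'(1) by (rule LeastI)
      then have "(v0, w) \<in> r ^^ Suc (d w')" using w'(2) by (rule relpow_Suc_I)
      then show ?thesis by (rule dle)
    qed
    ultimately have dw: "Suc (d w') = d w" using k by simp
    obtain e where "e \<in> tedges X" "(tsrc X e = w' \<and> ttgt X e = w) \<or> (tsrc X e = w \<and> ttgt X e = w')"
      using undir_adjE[OF w'(2)[unfolded r_def]] by blast
    then show ?thesis unfolding P_def using dw by blast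
  qed
  define h where "h w = (SOME e. P w e)" for w
  have hP: "P w (h w)" if "w \<in> tverts X - {v0}" for w
    unfolding h_def using exP[OF that] by (rule someI_ex)
  have inj: "inj_on h (tverts X - {v0})"
  proof (rule inj_onI)
    fix w1 w2 assume w1: "w1 \<in> tverts X - {v0}" and w2: "w2 \<in> tverts X - {v0}" and eq: "h w1 = h w2"
    define e where "e = h w1"
    obtain a where a: "Suc (d a) = d w1" "(tsrc X e = a \<and> ttgt X e = w1) \<or> (tsrc X e = w1 \<and> ttgt X e = a)"
      using hP[OF w1] unfolding P_def e_def by blast
    obtain b where b: "Suc (d b) = d w2" "(tsrc X e = b \<and> ttgt X e = w2) \<or> (tsrc X e = w2 \<and> ttgt X e = b)"
      using hP[OF w2] unfolding P_def e_def eq by blast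
    show "w1 = w2"
    proof (rule ccontr)
      assume ne: "w1 \<noteq> w2"
      have "w2 = a \<and> w1 = b" using a(2) b(2) ne by auto
      then show False using a(1) b(1) by simp
    qed
  qed
  have img: "h ` (tverts X - {v0}) \<subseteq> tedges X" using hP unfolding P_def by blast
  have "card (tverts X - {v0}) \<le> card (tedges X)"
    by (rule card_inj_on_le[OF inj img finE])
  moreover have "card (tverts X) = Suc (card (tverts X - {v0}))"
  proof -
    have "card (tverts X) > 0" using finV v0 card_gt_0_iff by blast
    then show ?thesis using finV v0 by simp
  qed
  ultimately show ?thesis by simp
qed


lemma tree_acyc:
  assumes t: "is_tree X" shows "acyc X"
  unfolding acyc_def
proof (intro ballI notI)
  fix e assume e: "e \<in> tedges X" and h: "(tsrc X e, ttgt X e) \<in> (undir_adj (delE X e))\<^sup>*"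
  define Y where "Y = delE X e"
  have tv: "tverts Y = tverts X" "tedges Y = tedges X - {e}" unfolding Y_def delE_def by simp_all
  have step: "(b, c) \<in> (undir_adj Y)\<^sup>*" if bc: "(b, c) \<in> undir_adj X" for b c
  proof -
    obtain f where f: "f \<in> tedges X" "(tsrc X f = b \<and> ttgt X f = c) \<or> (tsrc X f = c \<and> ttgt X f = b)"
      using undir_adjE[OF bc] by blast
    show ?thesis
    proof (cases "f = e")
      case True
      have h': "(tsrc X e, ttgt X e) \<in> (undir_adj Y)\<^sup>*" using h unfolding Y_def .
      from f(2) show ?thesis
      proof
        assume "tsrc X f = b \<and> ttgt X f = c"
        then show ?thesis using h' True by simp
      next
        assume "tsrc X f = c \<and> ttgt X f = b"
        then show ?thesis using rtrancl_undir_sym[OF h'] True by simp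
      qed
    next
      case False
      then have "f \<in> tedges Y" using f tv by simp
      then have "(b, c) \<in> undir_adj Y" using undir_adjI[of f Y] f(2) unfolding Y_def delE_def by auto
      then show ?thesis by simp
    qed
  qed
  have conn: "\<forall>w\<in>tverts Y. (tstart X, w) \<in> (undir_adj Y)\<^sup>*"
  proof
    fix w assume "w \<in> tverts Y"
    then have "(tstart X, w) \<in> (undir_adj X)\<^sup>*" using t tv unfolding is_tree_def by auto
    then show "(tstart X, w) \<in> (undir_adj Y)\<^sup>*"
    proof (induction rule: rtrancl_induct)
      case base then show ?case by simp
    next
      case (step b c)
      have "(b, c) \<in> (undir_adj Y)\<^sup>*" using step(2) by (rule \<open>\<And>b c. (b, c) \<in> undir_adj X \<Longrightarrow> (b, c) \<in> (undir_adj Y)\<^sup>*\<close>)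
      with step(3) show ?case by (rule rtrancl_trans)
    qed
  qed
  have "card (tverts Y) \<le> Suc (card (tedges Y))"
    using t tv conn unfolding is_tree_def by (intro spanning[of Y "tstart X"]) auto
  moreover have "card (tedges Y) = card (tedges X) - 1" using tv e t unfolding is_tree_def by simp
  moreover have "card (tedges X) > 0" using e t card_gt_0_iff unfolding is_tree_def by blast
  ultimately show False using t tv unfolding is_tree_def by simp
qed

lemma wverts_subset:
  "uwalk X u es w \<Longrightarrow> u \<in> tverts X \<Longrightarrow> (\<forall>e\<in>tedges X. tsrc X e \<in> tverts X \<and> ttgt X e \<in> tverts X) \<Longrightarrow>
   set (wverts X u es) \<subseteq> tverts X"
  by (induction es arbitrary: u) (auto simp: oth_def)

lemma walk_bound:
  assumes ac: "acyc X" and finV: "finite (tverts X)"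
    and ends: "\<forall>e\<in>tedges X. tsrc X e \<in> tverts X \<and> ttgt X e \<in> tverts X"
    and u: "u \<in> tverts X" and w: "uwalk X u es w" and nb: "nbP P es"
  shows "length es < card (tverts X)"
proof -
  have d: "distinct (wverts X u es)" by (rule walk_distinct[OF ac w nb])
  have s: "set (wverts X u es) \<subseteq> tverts X" by (rule wverts_subset[OF w u ends])
  have "length (wverts X u es) \<le> card (tverts X)"
    using card_mono[OF finV s] distinct_card[OF d] by simp
  then show ?thesis by simp
qed

lemma tauF_stable_gen:
  assumes fin: "finite (tedges X)"
  shows "(\<forall>es w. uwalk X v es w \<longrightarrow> nbP P es \<longrightarrow> length es < k) \<Longrightarrow> k \<le> n \<Longrightarrow>
         tauF chi X n v P = (tauF chi X k v P :: 'm)"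
proof (induction k arbitrary: v P n)
  case 0
  then show ?case using "0.prems"(1)[rule_format, of "[]" v] by simp
next
  case (Suc k)
  obtain n' where n: "n = Suc n'" using Suc.prems by (cases n) auto
  have kn: "k \<le> n'" using Suc.prems n by simp
  have o: "tauF chi X n' (ttgt X e) {e} = tauF chi X k (ttgt X e) {e}" if e: "e \<in> outS X v P" for e
  proof (rule Suc.IH[OF _ kn], intro allI impI)
    fix es w assume "uwalk X (ttgt X e) es w" "nbP {e} es"
    then have "uwalk X v (e # es) w" "nbP P (e # es)" using e by (auto simp: oth_def)
    then show "length es < k" using Suc.prems(1)[rule_format, of "e # es" w] by simp
  qed
  have i: "tauF chi X n' (tsrc X e) {e} = tauF chi X k (tsrc X e) {e}" if e: "e \<in> inS X v P" for e
  proof (rule Suc.IH[OF _ kn], intro allI impI)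
    fix es w assume "uwalk X (tsrc X e) es w" "nbP {e} es"
    moreover have "oth X e v = tsrc X e" using e by (auto simp: oth_def)
    ultimately have "uwalk X v (e # es) w" "nbP P (e # es)" using e by auto
    then show "length es < k" using Suc.prems(1)[rule_format, of "e # es" w] by simp
  qed
  have "prodE (outS X v P) (\<lambda>e. aplus (chi (tlab X e) * tauF chi X n' (ttgt X e) {e})) =
        prodE (outS X v P) (\<lambda>e. aplus (chi (tlab X e) * tauF chi X k (ttgt X e) {e}))"
    using fin o by (intro prodE_cong) auto
  moreover have "prodE (inS X v P) (\<lambda>e. astar (tauF chi X n' (tsrc X e) {e} * chi (tlab X e))) =
        prodE (inS X v P) (\<lambda>e. astar (tauF chi X k (tsrc X e) {e} * chi (tlab X e)))"
    using fin i by (intro prodE_cong) auto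
  ultimately show ?case unfolding n by (simp add: tauF.simps(2))
qed


fun avoid :: "('v, 'e, 's) stree \<Rightarrow> 'v set \<Rightarrow> 'v \<Rightarrow> 'e set \<Rightarrow> nat \<Rightarrow> bool" where
  "avoid X B v P 0 = True"
| "avoid X B v P (Suc n) = (v \<notin> B \<and>
     (\<forall>e\<in>tedges X. e \<notin> P \<and> (tsrc X e = v \<or> ttgt X e = v) \<longrightarrow> avoid X B (oth X e v) {e} n))"

lemma avoid_walk: "\<not> avoid X B v P n \<Longrightarrow> \<exists>es w. uwalk X v es w \<and> nbP P es \<and> w \<in> B"
proof (induction n arbitrary: v P)
  case 0
  then show ?case by simp
next
  case (Suc n)
  show ?case
  proof (cases "v \<in> B")
    case True
    then show ?thesis by (intro exI[of _ "[]"] exI[of _ v]) simp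
  next
    case False
    then obtain e where e: "e \<in> tedges X" "e \<notin> P" "tsrc X e = v \<or> ttgt X e = v"
      "\<not> avoid X B (oth X e v) {e} n" using Suc.prems by auto
    obtain es w where "uwalk X (oth X e v) es w" "nbP {e} es" "w \<in> B" using Suc.IH[OF e(4)] by blast
    then show ?thesis using e by (intro exI[of _ "e # es"] exI[of _ w]) simp
  qed
qed

lemma sim:
  assumes finX: "finite (tedges X)" and finW: "finite (tedges W)"
    and hom: "\<forall>e\<in>tedges X. ge e \<in> tedges W \<and> tsrc W (ge e) = gv (tsrc X e) \<and>
                ttgt W (ge e) = gv (ttgt X e) \<and> tlab W (ge e) = tlab X e"
    and inj: "inj_on ge (tedges X)"
    and locs: "\<forall>u\<in>tverts X - B. \<forall>e'\<in>tedges W. tsrc W e' = gv u \<longrightarrow> (\<exists>e\<in>tedges X. e' = ge e \<and> tsrc X e = u)"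
    and loct: "\<forall>u\<in>tverts X - B. \<forall>e'\<in>tedges W. ttgt W e' = gv u \<longrightarrow> (\<exists>e\<in>tedges X. e' = ge e \<and> ttgt X e = u)"
    and ends: "\<forall>e\<in>tedges X. tsrc X e \<in> tverts X \<and> ttgt X e \<in> tverts X"
  shows "u \<in> tverts X \<Longrightarrow> avoid X B u P n \<Longrightarrow> (\<forall>e\<in>tedges X. ge e \<in> Q \<longleftrightarrow> e \<in> P) \<Longrightarrow>
    tauF chi W n (gv u) Q = (tauF chi X n u P :: 'm)"
proof (induction n arbitrary: u P Q)
  case 0
  then show ?case by simp
next
  case (Suc n)
  have uB: "u \<notin> B" using Suc.prems by simp
  have av: "avoid X B (oth X e u) {e} n" if "e \<in> tedges X" "e \<notin> P" "tsrc X e = u \<or> ttgt X e = u" for e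
    using Suc.prems(2) that by auto
  have Qe: "\<forall>e'\<in>tedges X. ge e' \<in> {ge e} \<longleftrightarrow> e' \<in> {e}" if "e \<in> tedges X" for e
    using inj that by (auto dest: inj_onD)
  have so: "outS W (gv u) Q = ge ` outS X u P"
  proof
    show "outS W (gv u) Q \<subseteq> ge ` outS X u P"
    proof
      fix e' assume e': "e' \<in> outS W (gv u) Q"
      then obtain e where "e \<in> tedges X" "e' = ge e" "tsrc X e = u"
        using locs Suc.prems(1) uB by blast
      then show "e' \<in> ge ` outS X u P" using e' Suc.prems(3) by auto
    qed
    show "ge ` outS X u P \<subseteq> outS W (gv u) Q" using hom Suc.prems(3) by auto
  qed
  have si: "inS W (gv u) Q = ge ` inS X u P"
  proof
    show "inS W (gv u) Q \<subseteq> ge ` inS X u P"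
    proof
      fix e' assume e': "e' \<in> inS W (gv u) Q"
      then obtain e where "e \<in> tedges X" "e' = ge e" "ttgt X e = u"
        using loct Suc.prems(1) uB by blast
      then show "e' \<in> ge ` inS X u P" using e' Suc.prems(3) by auto
    qed
    show "ge ` inS X u P \<subseteq> inS W (gv u) Q" using hom Suc.prems(3) by auto
  qed
  have injo: "inj_on ge (outS X u P)" "inj_on ge (inS X u P)" using inj by (auto intro: inj_on_subset)
  have "prodE (outS W (gv u) Q) (\<lambda>e. aplus (chi (tlab W e) * tauF chi W n (ttgt W e) {e})) =
        prodE (outS X u P) (\<lambda>e. aplus (chi (tlab W (ge e)) * tauF chi W n (ttgt W (ge e)) {ge e}))"
    unfolding so using finX injo by (intro prodE_image) auto
  also have "\<dots> = prodE (outS X u P) (\<lambda>e. aplus (chi (tlab X e) * tauF chi X n (ttgt X e) {e}))"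
  proof (rule prodE_cong)
    fix e assume e: "e \<in> outS X u P"
    have oe: "oth X e u = ttgt X e" using e by (auto simp: oth_def)
    have "tauF chi W n (gv (ttgt X e)) {ge e} = tauF chi X n (ttgt X e) {e}"
      using e ends av[of e] oe by (intro Suc.IH Qe) auto
    then show "aplus (chi (tlab W (ge e)) * tauF chi W n (ttgt W (ge e)) {ge e}) =
       aplus (chi (tlab X e) * tauF chi X n (ttgt X e) {e})" using hom e by auto
  qed (use finX in auto)
  finally have 1: "prodE (outS W (gv u) Q) (\<lambda>e. aplus (chi (tlab W e) * tauF chi W n (ttgt W e) {e})) =
     prodE (outS X u P) (\<lambda>e. aplus (chi (tlab X e) * tauF chi X n (ttgt X e) {e}))" .
  have "prodE (inS W (gv u) Q) (\<lambda>e. astar (tauF chi W n (tsrc W e) {e} * chi (tlab W e))) =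
        prodE (inS X u P) (\<lambda>e. astar (tauF chi W n (tsrc W (ge e)) {ge e} * chi (tlab W (ge e))))"
    unfolding si using finX injo by (intro prodE_image) auto
  also have "\<dots> = prodE (inS X u P) (\<lambda>e. astar (tauF chi X n (tsrc X e) {e} * chi (tlab X e)))"
  proof (rule prodE_cong)
    fix e assume e: "e \<in> inS X u P"
    have oe: "oth X e u = tsrc X e" using e by (auto simp: oth_def)
    have "tauF chi W n (gv (tsrc X e)) {ge e} = tauF chi X n (tsrc X e) {e}"
      using e ends av[of e] oe by (intro Suc.IH Qe) auto
    then show "astar (tauF chi W n (tsrc W (ge e)) {ge e} * chi (tlab W (ge e))) =
       astar (tauF chi X n (tsrc X e) {e} * chi (tlab X e))" using hom e by auto
  qed (use finX in auto)
  finally have 2: "prodE (inS W (gv u) Q) (\<lambda>e. astar (tauF chi W n (tsrc W e) {e} * chi (tlab W e))) =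
     prodE (inS X u P) (\<lambda>e. astar (tauF chi X n (tsrc X e) {e} * chi (tlab X e)))" .
  show ?case using 1 2 by (simp add: tauF.simps(2))
qed


section \<open>Algebra of trunk decompositions\<close>

fun preA :: "(nat \<Rightarrow> 'm) \<Rightarrow> (nat \<Rightarrow> 'm) \<Rightarrow> nat \<Rightarrow> 'm" where
  "preA c x 0 = c 0"
| "preA c x (Suc i) = preA c x i * (x (Suc i) * c (Suc i))"

definition sufA :: "(nat \<Rightarrow> 'm) \<Rightarrow> (nat \<Rightarrow> 'm) \<Rightarrow> nat \<Rightarrow> nat \<Rightarrow> 'm" where
  "sufA c x n i = c i * prod_list (map (\<lambda>j. x j * c j) [Suc i..<Suc n])"

fun TpW :: "(nat \<Rightarrow> 'm) \<Rightarrow> (nat \<Rightarrow> 'm) \<Rightarrow> nat \<Rightarrow> 'm" where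
  "TpW W x 0 = W 0"
| "TpW W x (Suc i) = TpW W x i * (x (Suc i) * W (Suc i))"

lemma sufA_n: "sufA c x n n = c n" by (simp add: sufA_def)

lemma sufA_step: "i < n \<Longrightarrow> sufA c x n i = c i * (x (Suc i) * sufA c x n (Suc i))"
  unfolding sufA_def by (simp add: upt_conv_Cons mult.assoc del: upt_Suc)

lemma preA_c: "(\<forall>j. idem (c j)) \<Longrightarrow> preA c x i * c i = preA c x i"
  by (cases i) (auto simp: idem_def mult.assoc)

lemma preA_sufA: "i \<le> n \<Longrightarrow> preA c x i * prod_list (map (\<lambda>j. x j * c j) [Suc i..<Suc n]) = preA c x n"
proof (induction n)
  case 0
  then show ?case by simp
next
  case (Suc n)
  show ?case
  proof (cases "i = Suc n")
    case True
    then show ?thesis by simp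
  next
    case False
    then have "i \<le> n" using Suc.prems by simp
    then have "[Suc i..<Suc (Suc n)] = [Suc i..<Suc n] @ [Suc n]" by simp
    then show ?thesis using Suc.IH[OF \<open>i \<le> n\<close>] by (simp add: mult.assoc[symmetric])
  qed
qed

lemma preA_eq_sufA: "preA c x n = sufA c x n 0"
  using preA_sufA[of 0 n c x] by (simp add: sufA_def)

lemma trunk_algebra:
  assumes ci: "\<forall>j. idem (c j)"
    and hR: "\<forall>i<n. R i = c i * aplus (x (Suc i) * R (Suc i))" "R n = c n"
    and hL: "L 0 = c 0" "\<forall>i<n. L (Suc i) = c (Suc i) * astar (L i * x (Suc i))"
    and hW: "\<forall>i\<le>n. W i = L i * R i"
  shows "TpW W x n = sufA c x n 0" "W 0 = aplus (sufA c x n 0)" "W n = astar (sufA c x n 0)"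
proof -
  have Lp: "i \<le> n \<Longrightarrow> L i = astar (preA c x i)" for i
  proof (induction i)
    case 0
    then show ?case using hL ci by (simp add: astar_idem)
  next
    case (Suc i)
    have "L (Suc i) = c (Suc i) * astar (astar (preA c x i) * x (Suc i))"
      using hL(2) Suc by simp
    also have "\<dots> = c (Suc i) * astar (preA c x i * x (Suc i))" by (simp add: astar_astar_mult[symmetric])
    also have "\<dots> = astar (preA c x i * x (Suc i)) * c (Suc i)" using ci idem_comm by simp
    also have "\<dots> = astar (preA c x i * x (Suc i) * c (Suc i))" using ci by (simp add: astar_mult_idem)
    finally show ?case by (simp add: mult.assoc)
  qed
  have Rs: "R i = aplus (sufA c x n i)" if "i \<le> n" for i
    using that
  proof (induction i rule: inc_induct)
    case base
    then show ?case using hR ci by (simp add: sufA_n aplus_idem)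
  next
    case (step i)
    have "R i = c i * aplus (x (Suc i) * aplus (sufA c x n (Suc i)))" using hR step by simp
    also have "\<dots> = c i * aplus (x (Suc i) * sufA c x n (Suc i))" by (simp add: aplus_mult_aplus[symmetric])
    also have "\<dots> = aplus (c i * (x (Suc i) * sufA c x n (Suc i)))" using ci by (simp add: aplus_idem_mult)
    finally show ?case using sufA_step[OF step(2)] by simp
  qed
  have Wi: "W i = astar (preA c x i) * aplus (sufA c x n i)" if "i \<le> n" for i
    using hW that Lp Rs by simp
  have cs: "c i * aplus (sufA c x n i) = aplus (sufA c x n i)" for i
  proof -
    have "aplus (sufA c x n i) = c i * aplus (prod_list (map (\<lambda>j. x j * c j) [Suc i..<Suc n]))"
      unfolding sufA_def using ci by (simp add: aplus_idem_mult)
    then show ?thesis using ci by (simp add: mult.assoc[symmetric] idem_def)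
  qed
  show "W 0 = aplus (sufA c x n 0)"
    using Wi[of 0] ci cs[of 0] by (simp add: astar_idem)
  show "W n = astar (sufA c x n 0)"
  proof -
    have "W n = astar (preA c x n) * c n" using Wi[of n] ci by (simp add: sufA_n aplus_idem)
    also have "\<dots> = astar (preA c x n * c n)" using ci by (simp add: astar_mult_idem)
    also have "\<dots> = astar (preA c x n)" using preA_c[OF ci] by simp
    finally show ?thesis by (simp add: preA_eq_sufA)
  qed
  have Tp: "TpW W x i = preA c x i * aplus (sufA c x n i)" if "i \<le> n" for i
    using that
  proof (induction i)
    case 0
    then show ?case using Wi[of 0] ci by (simp add: astar_idem)
  next
    case (Suc i)
    define p where "p = preA c x (Suc i)"
    define s where "s = sufA c x n (Suc i)"
    define y where "y = x (Suc i)"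
    have il: "i < n" using Suc.prems by simp
    have "TpW W x (Suc i) = preA c x i * aplus (sufA c x n i) * (y * (astar p * aplus s))"
      using Suc Wi[OF Suc.prems] unfolding p_def s_def y_def by simp
    also have "aplus (sufA c x n i) = c i * aplus (y * s)"
      using sufA_step[OF il] ci unfolding s_def y_def by (simp add: aplus_idem_mult)
    also have "preA c x i * (c i * aplus (y * s)) = preA c x i * aplus (y * s)"
      using preA_c[OF ci] by (simp add: mult.assoc[symmetric])
    also have "astar p * aplus s = aplus s * astar p" using idem_comm by simp
    also have "preA c x i * aplus (y * s) * (y * (aplus s * astar p)) =
               preA c x i * ((aplus (y * aplus s) * (y * aplus s)) * astar p)"
      by (simp add: aplus_mult_aplus[symmetric] mult.assoc)
    also have "aplus (y * aplus s) * (y * aplus s) = y * aplus s" by (rule aplus_absorb)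
    also have "aplus s = c (Suc i) * aplus s" using cs[of "Suc i"] unfolding s_def by simp
    also have "preA c x i * ((y * (c (Suc i) * aplus s)) * astar p) = p * aplus s * astar p"
      unfolding p_def y_def by (simp add: mult.assoc)
    also have "p * aplus s * astar p = p * astar p * aplus s" using idem_comm[of "aplus s" "astar p"]
      by (simp add: mult.assoc)
    also have "p * astar p = p" by (rule astar_absorb)
    finally show ?case unfolding p_def s_def by simp
  qed
  show "TpW W x n = sufA c x n 0"
  proof -
    have "TpW W x n = preA c x n * aplus (c n)" using Tp[of n] by (simp add: sufA_n)
    also have "\<dots> = preA c x n * c n" using ci by (simp add: aplus_idem)
    also have "\<dots> = preA c x n" by (rule preA_c[OF ci])
    finally show ?thesis by (simp add: preA_eq_sufA)
  qed
qed


definition good :: "('v, 'e, 's) stree \<Rightarrow> bool" where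
  "good X \<longleftrightarrow> finite (tverts X) \<and> finite (tedges X) \<and>
     (\<forall>e\<in>tedges X. tsrc X e \<in> tverts X \<and> ttgt X e \<in> tverts X) \<and>
     tstart X \<in> tverts X \<and> tend X \<in> tverts X \<and> acyc X \<and>
     card (tverts X) \<le> Suc (card (tedges X)) \<and> (\<exists>es. is_dpath X (tstart X) es (tend X)) \<and>
     (\<forall>w\<in>tverts X. (tstart X, w) \<in> (undir_adj X)\<^sup>*)"

lemma tree_good: "is_tree X \<Longrightarrow> good X"
  using tree_acyc unfolding good_def is_tree_def by auto

lemma dpath_nth: "is_dpath X u es w \<Longrightarrow> i < length es \<Longrightarrow>
  es ! i \<in> tedges X \<and> tsrc X (es ! i) = (u # map (ttgt X) es) ! i"
proof (induction es arbitrary: u i)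
  case Nil then show ?case by simp
next
  case (Cons e es)
  then show ?case by (cases i) auto
qed

end

locale gtree = adq +
  fixes chi :: "'s \<Rightarrow> 'm::monoid_mult" and X :: "('v, 'e, 's) stree"
  assumes gd: "good X"
begin

definition es where "es = trunk X"
definition n where "n = length es"
definition vtx where "vtx i = (tstart X # map (ttgt X) es) ! i"
definition NN where "NN = Suc (card (tedges X))"
definition sg where "sg v P = tauF chi X NN v P"
definition cc where "cc i = sg (vtx i) (nth es ` {..<n})"
definition RR where "RR i = sg (vtx i) (nth es ` {..<i})"
definition LL where "LL i = sg (vtx i) (nth es ` {i..<n})"
definition WW where "WW i = sg (vtx i) {}"
definition xx where "xx j = chi (tlab X (es ! (j - 1)))"

lemma finV: "finite (tverts X)" and finE: "finite (tedges X)"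
  and ends: "\<forall>e\<in>tedges X. tsrc X e \<in> tverts X \<and> ttgt X e \<in> tverts X"
  and stV: "tstart X \<in> tverts X" and acX: "acyc X" and cardV: "card (tverts X) \<le> NN"
  using gd unfolding good_def NN_def by auto

lemma nlX: "noloops X" using acyc_noloops[OF acX] .

lemma dp: "is_dpath X (tstart X) es (tend X)"
proof -
  obtain p where p: "is_dpath X (tstart X) p (tend X)" using gd unfolding good_def by blast
  then show ?thesis unfolding es_def using trunk_eq[OF acX p] by simp
qed

lemma vdist: "distinct (tstart X # map (ttgt X) es)"
  using walk_distinct[OF acX dpath_uwalk[OF dp] dpath_nbP[OF nlX dp]] dpath_wverts[OF dp] by simp

lemma es_dist: "distinct es"
  using vdist by (simp add: distinct_map)

lemma es_nth: "k < n \<Longrightarrow> es ! k \<in> tedges X \<and> tsrc X (es ! k) = vtx k \<and> ttgt X (es ! k) = vtx (Suc k)"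
  using dpath_nth[OF dp, of k] unfolding vtx_def n_def by simp

lemma vtx_inj: "i \<le> n \<Longrightarrow> j \<le> n \<Longrightarrow> vtx i = vtx j \<Longrightarrow> i = j"
  using nth_eq_iff_index_eq[OF vdist, of i j] unfolding vtx_def n_def by simp

lemma vtxV: "i \<le> n \<Longrightarrow> vtx i \<in> tverts X"
proof (cases i)
  case 0 then show ?thesis using stV by (simp add: vtx_def)
next
  case (Suc k)
  assume "i \<le> n"
  then have "k < n" using Suc by simp
  then show ?thesis using es_nth[of k] ends Suc by auto
qed

lemma stable: "v \<in> tverts X \<Longrightarrow> NN \<le> m \<Longrightarrow> tauF chi X m v P = sg v P"
proof -
  assume v: "v \<in> tverts X" and m: "NN \<le> m"
  have b: "\<forall>es w. uwalk X v es w \<longrightarrow> nbP P es \<longrightarrow> length es < card (tverts X)"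
    using walk_bound[OF acX finV ends v] by (intro allI impI)
  have 1: "tauF chi X m v P = tauF chi X (card (tverts X)) v P"
    by (rule tauF_stable_gen[OF finE b]) (use m cardV in simp)
  have 2: "tauF chi X NN v P = tauF chi X (card (tverts X)) v P"
    by (rule tauF_stable_gen[OF finE b]) (use cardV in simp)
  show ?thesis using 1 2 unfolding sg_def by simp
qed

lemma inc_trunk: "j \<le> n \<Longrightarrow> k < n \<Longrightarrow> (tsrc X (es ! k) = vtx j \<longrightarrow> k = j) \<and> (ttgt X (es ! k) = vtx j \<longrightarrow> Suc k = j)"
proof (intro conjI impI)
  assume j: "j \<le> n" and k: "k < n"
  {
    assume "tsrc X (es ! k) = vtx j"
    then have "vtx k = vtx j" using es_nth[OF k] by simp
    then show "k = j" using vtx_inj[of k j] j k by simp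
  }
  {
    assume "ttgt X (es ! k) = vtx j"
    then have "vtx (Suc k) = vtx j" using es_nth[OF k] by simp
    then show "Suc k = j" using vtx_inj[of "Suc k" j] j k by simp
  }
qed

lemma nth_in_img: "k < n \<Longrightarrow> I \<subseteq> {..<n} \<Longrightarrow> es ! k \<in> nth es ` I \<longleftrightarrow> k \<in> I"
proof
  assume k: "k < n" and I: "I \<subseteq> {..<n}" and "es ! k \<in> nth es ` I"
  then obtain k' where "k' \<in> I" "es ! k = es ! k'" by auto
  then show "k \<in> I" using nth_eq_iff_index_eq[OF es_dist, of k k'] k I unfolding n_def by auto
qed auto

lemma sg_local:
  assumes j: "j \<le> n" and I: "I \<subseteq> {..<n}" and I': "I' \<subseteq> {..<n}"
    and h1: "j < n \<Longrightarrow> (j \<in> I \<longleftrightarrow> j \<in> I')"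
    and h2: "0 < j \<Longrightarrow> (j - 1 \<in> I \<longleftrightarrow> j - 1 \<in> I')"
  shows "tauF chi X m (vtx j) (nth es ` I) = tauF chi X m (vtx j) (nth es ` I')"
proof (rule tauF_local)
  fix e assume e: "e \<in> tedges X" "tsrc X e = vtx j \<or> ttgt X e = vtx j"
  show "e \<in> nth es ` I \<longleftrightarrow> e \<in> nth es ` I'"
  proof (cases "e \<in> set es")
    case False
    have "nth es ` I \<subseteq> set es" "nth es ` I' \<subseteq> set es" using I I' by (auto simp: n_def)
    then show ?thesis using False by blast
  next
    case True
    then obtain k where k: "k < n" "e = es ! k" by (auto simp: in_set_conv_nth n_def)
    have "k = j \<or> Suc k = j" using inc_trunk[OF j k(1)] e k by auto
    then show ?thesis using nth_in_img[OF k(1) I] nth_in_img[OF k(1) I'] h1 h2 k by auto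
  qed
qed

lemma cc_idem: "idem (cc i)" unfolding cc_def sg_def by simp

lemma hR1: "i < n \<Longrightarrow> RR i = cc i * aplus (xx (Suc i) * RR (Suc i))"
proof -
  assume i: "i < n"
  define g where "g = es ! i"
  have g: "g \<in> tedges X" "tsrc X g = vtx i" "ttgt X g = vtx (Suc i)" using es_nth[OF i] g_def by auto
  have gA: "g \<notin> nth es ` {..<i}" using nth_in_img[OF i, of "{..<i}"] i g_def by auto
  have nl: "ttgt X g \<noteq> vtx i" using g nlX unfolding noloops_def by auto
  have vi: "vtx i \<in> tverts X" using vtxV i by simp
  have vi1: "vtx (Suc i) \<in> tverts X" using vtxV i by simp
  have "RR i = tauF chi X (Suc NN) (vtx i) (nth es ` {..<i})"
    unfolding RR_def using stable[OF vi] by simp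
  also have "\<dots> = aplus (chi (tlab X g) * tauF chi X NN (ttgt X g) {g}) *
       tauF chi X (Suc NN) (vtx i) (insert g (nth es ` {..<i}))"
    by (rule tauF_split_out[OF finE g(1,2) gA nl])
  also have "tauF chi X NN (ttgt X g) {g} = RR (Suc i)"
  proof -
    have "tauF chi X NN (vtx (Suc i)) (nth es ` {i}) = tauF chi X NN (vtx (Suc i)) (nth es ` {..<Suc i})"
      using i by (intro sg_local) auto
    then show ?thesis unfolding RR_def sg_def using g(3) unfolding g_def by simp
  qed
  also have "tauF chi X (Suc NN) (vtx i) (insert g (nth es ` {..<i})) = cc i"
  proof -
    have "insert g (nth es ` {..<i}) = nth es ` {..<Suc i}" unfolding g_def by (auto simp: lessThan_Suc)
    moreover have "tauF chi X (Suc NN) (vtx i) (nth es ` {..<Suc i}) = tauF chi X (Suc NN) (vtx i) (nth es ` {..<n})"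
      using i by (intro sg_local) auto
    ultimately show ?thesis unfolding cc_def using stable[OF vi] by simp
  qed
  finally show ?thesis unfolding xx_def g_def using idem_comm[OF idem_aplus cc_idem] by simp
qed

lemma hR2: "RR n = cc n" unfolding RR_def cc_def ..

lemma hL1: "LL 0 = cc 0" unfolding LL_def cc_def by (simp add: atLeast0LessThan)

lemma hL2: "i < n \<Longrightarrow> LL (Suc i) = cc (Suc i) * astar (LL i * xx (Suc i))"
proof -
  assume i: "i < n"
  define g where "g = es ! i"
  have g: "g \<in> tedges X" "tsrc X g = vtx i" "ttgt X g = vtx (Suc i)" using es_nth[OF i] g_def by auto
  have sub: "{Suc i..<n} \<subseteq> {..<n}" by auto
  have gA: "g \<notin> nth es ` {Suc i..<n}" using nth_in_img[OF i sub] g_def by simp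
  have nl: "tsrc X g \<noteq> vtx (Suc i)" using g nlX unfolding noloops_def by auto
  have vi: "vtx i \<in> tverts X" using vtxV i by simp
  have vi1: "vtx (Suc i) \<in> tverts X" using vtxV i by simp
  have "LL (Suc i) = tauF chi X (Suc NN) (vtx (Suc i)) (nth es ` {Suc i..<n})"
    unfolding LL_def using stable[OF vi1] by simp
  also have "\<dots> = astar (tauF chi X NN (tsrc X g) {g} * chi (tlab X g)) *
       tauF chi X (Suc NN) (vtx (Suc i)) (insert g (nth es ` {Suc i..<n}))"
    by (rule tauF_split_in[OF finE g(1,3) gA nl])
  also have "tauF chi X NN (tsrc X g) {g} = LL i"
  proof -
    have "tauF chi X NN (vtx i) (nth es ` {i}) = tauF chi X NN (vtx i) (nth es ` {i..<n})"
      using i by (intro sg_local) auto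
    then show ?thesis unfolding LL_def sg_def using g(2) unfolding g_def by simp
  qed
  also have "tauF chi X (Suc NN) (vtx (Suc i)) (insert g (nth es ` {Suc i..<n})) = cc (Suc i)"
  proof -
    have "{i..<n} = insert i {Suc i..<n}" using i by auto
    then have "insert g (nth es ` {Suc i..<n}) = nth es ` {i..<n}" unfolding g_def by simp
    moreover have "tauF chi X (Suc NN) (vtx (Suc i)) (nth es ` {i..<n}) = tauF chi X (Suc NN) (vtx (Suc i)) (nth es ` {..<n})"
      using i by (intro sg_local) auto
    ultimately show ?thesis unfolding cc_def using stable[OF vi1] by simp
  qed
  finally show ?thesis unfolding xx_def g_def using idem_comm[OF idem_astar cc_idem] by simp
qed


lemma LL_cc: "i \<le> n \<Longrightarrow> LL i * cc i = LL i"
proof (cases i)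
  case 0
  then show ?thesis using hL1 cc_idem by (simp add: idem_def)
next
  case (Suc k)
  assume "i \<le> n"
  then have k: "k < n" using Suc by simp
  have "LL i * cc i = cc i * (astar (LL k * xx (Suc k)) * cc i)"
    using hL2[OF k] Suc by (simp add: mult.assoc)
  also have "astar (LL k * xx (Suc k)) * cc i = cc i * astar (LL k * xx (Suc k))"
    using idem_comm[OF idem_astar cc_idem] by simp
  also have "cc i * (cc i * astar (LL k * xx (Suc k))) = cc i * astar (LL k * xx (Suc k))"
    using cc_idem[of i] by (simp add: mult.assoc[symmetric] idem_def)
  finally show ?thesis using hL2[OF k] Suc by simp
qed

lemma hW: "i \<le> n \<Longrightarrow> WW i = LL i * RR i"
proof -
  assume iN: "i \<le> n"
  show ?thesis
  proof (cases "i < n")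
    case False
    then have "i = n" using iN by simp
    then show ?thesis using LL_cc[of n] hR2 unfolding WW_def LL_def by simp
  next
    case True
    note i = True
    define g where "g = es ! i"
    have g: "g \<in> tedges X" "tsrc X g = vtx i" "ttgt X g = vtx (Suc i)" using es_nth[OF i] g_def by auto
    have nl: "ttgt X g \<noteq> vtx i" using g nlX unfolding noloops_def by auto
    have vi: "vtx i \<in> tverts X" using vtxV i by simp
    have "WW i = tauF chi X (Suc NN) (vtx i) {}"
      unfolding WW_def using stable[OF vi] by simp
    also have "\<dots> = aplus (chi (tlab X g) * tauF chi X NN (ttgt X g) {g}) *
         tauF chi X (Suc NN) (vtx i) (insert g {})"
      by (rule tauF_split_out[OF finE g(1,2) _ nl]) simp
    also have "tauF chi X NN (ttgt X g) {g} = RR (Suc i)"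
    proof -
      have "tauF chi X NN (vtx (Suc i)) (nth es ` {i}) = tauF chi X NN (vtx (Suc i)) (nth es ` {..<Suc i})"
        using i by (intro sg_local) auto
      then show ?thesis unfolding RR_def sg_def using g(3) unfolding g_def by simp
    qed
    also have "tauF chi X (Suc NN) (vtx i) (insert g {}) = LL i"
    proof -
      have "tauF chi X (Suc NN) (vtx i) (nth es ` {i}) = tauF chi X (Suc NN) (vtx i) (nth es ` {i..<n})"
        using i by (intro sg_local) auto
      then show ?thesis unfolding LL_def g_def using stable[OF vi] by simp
    qed
    also have "aplus (chi (tlab X g) * RR (Suc i)) * LL i = LL i * aplus (xx (Suc i) * RR (Suc i))"
      using idem_comm[of "LL i"] unfolding xx_def g_def LL_def sg_def by simp
    also have "\<dots> = LL i * cc i * aplus (xx (Suc i) * RR (Suc i))" using LL_cc[OF iN] by simp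
    also have "\<dots> = LL i * RR i" using hR1[OF i] by (simp add: mult.assoc)
    finally show ?thesis .
  qed
qed

lemma rho_sufA: "rho chi X = sufA cc xx n 0"
proof -
  have se: "set es = nth es ` {..<n}" unfolding n_def by (auto simp: in_set_conv_nth)
  have t: "trunk X = es" unfolding es_def ..
  have c0: "tauF chi X NN (tstart X) (set es) = cc 0" unfolding cc_def sg_def vtx_def se by simp
  have m: "map (\<lambda>e. chi (tlab X e) * tauF chi X NN (ttgt X e) (set es)) es =
           map (\<lambda>j. xx j * cc j) [Suc 0..<Suc n]"
  proof -
    have "map (\<lambda>e. chi (tlab X e) * tauF chi X NN (ttgt X e) (set es)) es =
        map (\<lambda>k. chi (tlab X (es ! k)) * tauF chi X NN (ttgt X (es ! k)) (set es)) [0..<n]"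
      unfolding n_def by (rule nth_equalityI) auto
    also have "\<dots> = map (\<lambda>k. xx (Suc k) * cc (Suc k)) [0..<n]"
    proof (rule map_cong[OF refl])
      fix k assume "k \<in> set [0..<n]"
      then have k: "k < n" by simp
      show "chi (tlab X (es ! k)) * tauF chi X NN (ttgt X (es ! k)) (set es) = xx (Suc k) * cc (Suc k)"
        unfolding xx_def cc_def sg_def using es_nth[OF k] se by simp
    qed
    also have "\<dots> = map (\<lambda>j. xx j * cc j) (map Suc [0..<n])" by (simp only: map_map comp_def)
    also have "map Suc [0..<n] = [Suc 0..<Suc n]" by (rule map_Suc_upt)
    finally show ?thesis .
  qed
  show ?thesis unfolding rho_def Let_def t NN_def[symmetric] c0 m sufA_def by simp
qed

lemma decomp: "rho chi X = TpW WW xx n" "WW 0 = aplus (rho chi X)" "WW n = astar (rho chi X)"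
proof -
  have ci: "\<forall>j. idem (cc j)" using cc_idem by simp
  have hR: "\<forall>i<n. RR i = cc i * aplus (xx (Suc i) * RR (Suc i))" using hR1 by simp
  have hL: "\<forall>i<n. LL (Suc i) = cc (Suc i) * astar (LL i * xx (Suc i))" using hL2 by simp
  have hW': "\<forall>i\<le>n. WW i = LL i * RR i" using hW by simp
  note ta = trunk_algebra[OF ci hR hR2 hL1 hL hW']
  show "rho chi X = TpW WW xx n" using ta(1) rho_sufA by simp
  show "WW 0 = aplus (rho chi X)" using ta(2) rho_sufA by simp
  show "WW n = astar (rho chi X)" using ta(3) rho_sufA by simp
qed


end

context adq
begin

lemma TpW_cong: "(\<And>i. i \<le> n \<Longrightarrow> W i = W' i) \<Longrightarrow> TpW W x n = TpW W' x n"
  by (induction n) auto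

lemma rtrancl_map:
  assumes "\<And>a b. (a, b) \<in> r \<Longrightarrow> (h a, h b) \<in> s\<^sup>*"
    and "(x, y) \<in> r\<^sup>*"
  shows "(h x, h y) \<in> s\<^sup>*"
  using assms(2)
proof (induction rule: rtrancl_induct)
  case base then show ?case by simp
next
  case (step b c)
  show ?case using step(3) assms(1)[OF step(2)] by (rule rtrancl_trans)
qed

lemma dpath_sub:
  "is_dpath Z u es w \<Longrightarrow> tedges Z \<subseteq> tedges W \<Longrightarrow> tsrc Z = tsrc W \<Longrightarrow> ttgt Z = ttgt W \<Longrightarrow> is_dpath W u es w"
  by (induction es arbitrary: u) auto

lemma dpath_sub2:
  "is_dpath W u es w \<Longrightarrow> set es \<subseteq> tedges Z \<Longrightarrow> tsrc Z = tsrc W \<Longrightarrow> ttgt Z = ttgt W \<Longrightarrow> is_dpath Z u es w"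
  by (induction es arbitrary: u) auto

lemma dpath_morph:
  "is_dpath X u es w \<Longrightarrow> gmorph X Y fv fe \<Longrightarrow> is_dpath Y (fv u) (map fe es) (fv w)"
  by (induction es arbitrary: u) (auto simp: gmorph_def)

lemma retract_facts:
  assumes gW: "good W" and r: "is_retraction W fv fe" and Z: "Z = retract_image W fv fe"
  shows "good Z" "trunk Z = trunk W"
    "\<And>v. v \<in> tverts Z \<Longrightarrow> tauF chi Z (Suc (card (tedges Z))) v {} = (tauF chi W (Suc (card (tedges W))) v {} :: 'm)"
proof -
  have m: "is_morphism W W fv fe" and idv: "\<forall>v\<in>tverts W. fv (fv v) = fv v"
    using r unfolding is_retraction_def by auto
  have fields: "tverts Z = fv ` tverts W" "tedges Z = fe ` tedges W" "tsrc Z = tsrc W" "ttgt Z = ttgt W"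
    "tlab Z = tlab W" "tstart Z = tstart W" "tend Z = tend W"
    unfolding Z retract_image_def by simp_all
  have finV: "finite (tverts W)" and finE: "finite (tedges W)"
    and ends: "\<forall>e\<in>tedges W. tsrc W e \<in> tverts W \<and> ttgt W e \<in> tverts W"
    and st: "tstart W \<in> tverts W" and en: "tend W \<in> tverts W" and ac: "acyc W"
    and conn: "\<forall>w\<in>tverts W. (tstart W, w) \<in> (undir_adj W)\<^sup>*"
    using gW unfolding good_def by auto
  obtain p where p: "is_dpath W (tstart W) p (tend W)" using gW unfolding good_def by blast
  have EZ: "tedges Z \<subseteq> tedges W" using m fields unfolding is_morphism_def by auto
  have VZ: "tverts Z \<subseteq> tverts W" using m fields unfolding is_morphism_def by auto
  have gm1: "gmorph W Z fv fe" using m fields unfolding is_morphism_def gmorph_def by auto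
  have gm2: "gmorph Z W id id" using EZ fields unfolding gmorph_def by auto
  have fixv: "fv v = v" if "v \<in> tverts Z" for v using that idv fields by auto
  have stZ: "tstart Z \<in> tverts Z" using st m fields unfolding is_morphism_def by (metis image_eqI)
  have enZ: "tend Z \<in> tverts Z" using en m fields unfolding is_morphism_def by (metis image_eqI)
  have endsZ: "\<forall>e\<in>tedges Z. tsrc Z e \<in> tverts Z \<and> ttgt Z e \<in> tverts Z"
    using m fields ends unfolding is_morphism_def by auto
  have acZ: "acyc Z" unfolding acyc_def
  proof (intro ballI notI)
    fix e assume e: "e \<in> tedges Z" and h: "(tsrc Z e, ttgt Z e) \<in> (undir_adj (delE Z e))\<^sup>*"
    have sub: "undir_adj (delE Z e) \<subseteq> undir_adj (delE W e)"
      using EZ fields unfolding undir_adj_def delE_def by auto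
    have "(tsrc Z e, ttgt Z e) \<in> (undir_adj (delE W e))\<^sup>*"
      using rtrancl_mono[OF sub] h by (rule subsetD)
    then have h2: "(tsrc W e, ttgt W e) \<in> (undir_adj (delE W e))\<^sup>*" using fields by simp
    have eW: "e \<in> tedges W" using e EZ by (rule subsetD[rotated])
    have "(tsrc W e, ttgt W e) \<notin> (undir_adj (delE W e))\<^sup>*" using ac eW unfolding acyc_def by (rule bspec)
    then show False using h2 by contradiction
  qed
  have connZ: "\<forall>w\<in>tverts Z. (tstart Z, w) \<in> (undir_adj Z)\<^sup>*"
  proof
    fix w assume "w \<in> tverts Z"
    then obtain u where u: "u \<in> tverts W" "w = fv u" using fields by auto
    have stepZ: "(fv a, fv b) \<in> (undir_adj Z)\<^sup>*" if ab: "(a, b) \<in> undir_adj W" for a b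
    proof -
      obtain e where e: "e \<in> tedges W" "(tsrc W e = a \<and> ttgt W e = b) \<or> (tsrc W e = b \<and> ttgt W e = a)"
        using undir_adjE[OF ab] by blast
      have "fe e \<in> tedges Z" "tsrc Z (fe e) = fv (tsrc W e)" "ttgt Z (fe e) = fv (ttgt W e)"
        using gm1 e unfolding gmorph_def by auto
      then have "(fv a, fv b) \<in> undir_adj Z" using undir_adjI[of "fe e" Z] e(2) by auto
      then show ?thesis by simp
    qed
    have "(tstart W, u) \<in> (undir_adj W)\<^sup>*" using conn u(1) by (rule bspec)
    then have "(fv (tstart W), fv u) \<in> (undir_adj Z)\<^sup>*"
    proof (induction rule: rtrancl_induct)
      case base then show ?case by simp
    next
      case (step b c)
      show ?case using step(3) stepZ[OF step(2)] by (rule rtrancl_trans)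
    qed
    moreover have "fv (tstart W) = tstart W" using m unfolding is_morphism_def by simp
    ultimately show "(tstart Z, w) \<in> (undir_adj Z)\<^sup>*" using u fields by simp
  qed
  have pZ: "is_dpath W (tstart W) (map fe p) (tend W)"
    using dpath_morph[OF p, of W fv fe] m unfolding is_morphism_def gmorph_def by auto
  have mp: "map fe p = p" using dpath_unique[OF ac pZ p] .
  have pZ': "is_dpath Z (tstart Z) p (tend Z)"
  proof -
    have "set p \<subseteq> tedges W" using uwalk_edges[OF dpath_uwalk[OF p]] .
    then have "fe ` set p \<subseteq> fe ` tedges W" by (rule image_mono)
    moreover have "fe ` set p = set p" using mp by (metis list.set_map)
    ultimately have "set p \<subseteq> tedges Z" using fields by simp
    then have "is_dpath Z (tstart W) p (tend W)" by (rule dpath_sub2[OF p]) (simp_all add: fields)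
    then show ?thesis using fields by simp
  qed
  have finVZ: "finite (tverts Z)" using finV fields by simp
  have finEZ: "finite (tedges Z)" using finE fields by simp
  have cardZ: "card (tverts Z) \<le> Suc (card (tedges Z))"
    by (rule spanning[OF finVZ finEZ stZ connZ])
  have ex: "\<exists>es. is_dpath Z (tstart Z) es (tend Z)" using pZ' by (rule exI)
  show gZ: "good Z" unfolding good_def
    using finVZ finEZ endsZ stZ enZ acZ cardZ ex connZ by (intro conjI)
  show "trunk Z = trunk W" using trunk_eq[OF acZ pZ'] trunk_eq[OF ac p] by simp
  fix v assume v: "v \<in> tverts Z"
  have vW: "v \<in> tverts W" using v VZ by auto
  interpret gW: gtree chi W using adq gW by unfold_locales
  interpret gZ: gtree chi Z using adq gZ by unfold_locales
  define K where "K = Suc (card (tedges W)) + Suc (card (tedges Z))"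
  have nlW: "noloops W" using acyc_noloops[OF ac] .
  have nlZ: "noloops Z" using acyc_noloops[OF acZ] .
  have 1: "le (tauF chi W K (id v) {}) (tauF chi Z K v {})"
    by (rule morph_le[OF finEZ finE gm2 nlW]) simp
  have 2: "le (tauF chi Z K (fv v) {}) (tauF chi W K v {})"
    by (rule morph_le[OF finE finEZ gm1 nlZ]) simp
  have sW: "tauF chi W K v {} = gW.sg v {}" using gW.stable[OF vW] unfolding K_def gW.NN_def by simp
  have sZ: "tauF chi Z K v {} = gZ.sg v {}" using gZ.stable[OF v] unfolding K_def gZ.NN_def by simp
  have "gZ.sg v {} = gW.sg v {}"
    using 1 2 sW sZ fixv[OF v] le_antisym unfolding gW.sg_def gZ.sg_def by simp
  then show "tauF chi Z (Suc (card (tedges Z))) v {} = tauF chi W (Suc (card (tedges W))) v {}"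
    unfolding gW.sg_def gZ.sg_def gW.NN_def gZ.NN_def .
qed


lemma retract_rho:
  assumes gW: "good W" and r: "is_retraction W fv fe" and Z: "Z = retract_image W fv fe"
  shows "rho chi Z = (rho chi W :: 'm)"
proof -
  note rf = retract_facts[OF gW r Z]
  interpret gW: gtree chi W using adq gW by unfold_locales
  interpret gZ: gtree chi Z using adq rf(1) by unfold_locales
  have fields: "tsrc Z = tsrc W" "ttgt Z = ttgt W" "tlab Z = tlab W" "tstart Z = tstart W"
    unfolding Z retract_image_def by simp_all
  have es: "gZ.es = gW.es" unfolding gZ.es_def gW.es_def using rf(2) .
  have n: "gZ.n = gW.n" unfolding gZ.n_def gW.n_def es ..
  have vtx: "gZ.vtx = gW.vtx" unfolding gZ.vtx_def[abs_def] gW.vtx_def[abs_def] es fields ..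
  have xx: "gZ.xx = gW.xx" unfolding gZ.xx_def[abs_def] gW.xx_def[abs_def] es fields ..
  have WW: "gZ.WW i = gW.WW i" if "i \<le> gW.n" for i
  proof -
    have "gZ.vtx i \<in> tverts Z" using gZ.vtxV that n by simp
    then show ?thesis unfolding gZ.WW_def gW.WW_def gZ.sg_def gW.sg_def gZ.NN_def gW.NN_def
      using rf(3) vtx by simp
  qed
  have "rho chi Z = TpW gZ.WW gZ.xx gZ.n" by (rule gZ.decomp(1))
  also have "\<dots> = TpW gW.WW gW.xx gW.n" unfolding n xx using WW by (rule TpW_cong)
  also have "\<dots> = rho chi W" by (rule gW.decomp(1)[symmetric])
  finally show ?thesis .
qed

lemma tauF_upd_end: "tauF chi (X\<lparr>tend := a\<rparr>) n v P = tauF chi X n v P"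
  by (induction n arbitrary: v P) (simp_all add: tauF.simps(2))

lemma tauF_upd_start: "tauF chi (X\<lparr>tstart := a\<rparr>) n v P = tauF chi X n v P"
  by (induction n arbitrary: v P) (simp_all add: tauF.simps(2))

lemma undir_adj_upd_end: "undir_adj (X\<lparr>tend := a\<rparr>) = undir_adj X"
  unfolding undir_adj_def by simp
lemma undir_adj_upd_start: "undir_adj (X\<lparr>tstart := a\<rparr>) = undir_adj X"
  unfolding undir_adj_def by simp

lemma dpath_upd_end: "is_dpath (X\<lparr>tend := a\<rparr>) u es w = is_dpath X u es w"
  by (induction es arbitrary: u) auto
lemma dpath_upd_start: "is_dpath (X\<lparr>tstart := a\<rparr>) u es w = is_dpath X u es w"
  by (induction es arbitrary: u) auto

lemma tree_tplus: "is_tree X \<Longrightarrow> is_tree (tplus X)"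
  unfolding is_tree_def tplus_def undir_adj_upd_end dpath_upd_end
  by (auto intro: exI[of _ "[]"])

lemma tree_tstar: "is_tree X \<Longrightarrow> is_tree (tstar X)"
  unfolding is_tree_def tstar_def undir_adj_upd_start dpath_upd_start
  by (auto intro: exI[of _ "[]"])

lemma (in gtree) vtx_n: "vtx n = tend X"
  using wverts_last[OF dpath_uwalk[OF dp]] dpath_wverts[OF dp] unfolding vtx_def n_def by simp

lemma rho_tplus: "is_tree X \<Longrightarrow> rho chi (tplus X) = aplus (rho chi X :: 'm)"
proof -
  assume t: "is_tree X"
  have gX: "good X" using tree_good[OF t] .
  have gP: "good (tplus X)" using tree_good[OF tree_tplus[OF t]] .
  interpret gX: gtree chi X using adq gX by unfold_locales
  interpret gP: gtree chi "tplus X" using adq gP by unfold_locales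
  have "gP.es = []" unfolding gP.es_def
    by (rule trunk_eq[OF gP.acX]) (simp add: tplus_def)
  then have n0: "gP.n = 0" unfolding gP.n_def by simp
  have "rho chi (tplus X) = gP.WW 0" using gP.decomp(1) n0 by simp
  also have "\<dots> = gX.WW 0"
    unfolding gP.WW_def gX.WW_def gP.sg_def gX.sg_def gP.NN_def gX.NN_def gP.vtx_def gX.vtx_def
    by (simp add: tplus_def tauF_upd_end)
  also have "\<dots> = aplus (rho chi X)" by (rule gX.decomp(2))
  finally show ?thesis .
qed

lemma rho_tstar: "is_tree X \<Longrightarrow> rho chi (tstar X) = astar (rho chi X :: 'm)"
proof -
  assume t: "is_tree X"
  have gX: "good X" using tree_good[OF t] .
  have gP: "good (tstar X)" using tree_good[OF tree_tstar[OF t]] .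
  interpret gX: gtree chi X using adq gX by unfold_locales
  interpret gP: gtree chi "tstar X" using adq gP by unfold_locales
  have "gP.es = []" unfolding gP.es_def
    by (rule trunk_eq[OF gP.acX]) (simp add: tstar_def)
  then have n0: "gP.n = 0" unfolding gP.n_def by simp
  have "rho chi (tstar X) = gP.WW 0" using gP.decomp(1) n0 by simp
  also have "\<dots> = gX.WW gX.n"
    unfolding gP.WW_def gX.WW_def gP.sg_def gX.sg_def gP.NN_def gX.NN_def gP.vtx_def gX.vtx_n
    by (simp add: tstar_def tauF_upd_start)
  also have "\<dots> = astar (rho chi X)" by (rule gX.decomp(3))
  finally show ?thesis .
qed


section \<open>Products\<close>

lemma tprod_fields:
  "tverts (tprod X Y) = Inl ` tverts X \<union> glue X Y ` tverts Y"
  "tedges (tprod X Y) = Inl ` tedges X \<union> Inr ` tedges Y"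
  "tsrc (tprod X Y) (Inl e) = Inl (tsrc X e)" "tsrc (tprod X Y) (Inr f) = glue X Y (tsrc Y f)"
  "ttgt (tprod X Y) (Inl e) = Inl (ttgt X e)" "ttgt (tprod X Y) (Inr f) = glue X Y (ttgt Y f)"
  "tlab (tprod X Y) (Inl e) = tlab X e" "tlab (tprod X Y) (Inr f) = tlab Y f"
  "tstart (tprod X Y) = Inl (tstart X)" "tend (tprod X Y) = glue X Y (tend Y)"
  unfolding tprod_def by simp_all

lemma glue_eq_Inl: "glue X Y w = Inl v \<longleftrightarrow> w = tstart Y \<and> v = tend X"
  unfolding glue_def by auto
lemma glue_eq_Inr: "glue X Y w = Inr u \<longleftrightarrow> w \<noteq> tstart Y \<and> u = w"
  unfolding glue_def by auto
lemma glue_start: "glue X Y (tstart Y) = Inl (tend X)"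
  unfolding glue_def by simp
lemma glue_inj: "glue X Y a = glue X Y b \<Longrightarrow> a = b"
  unfolding glue_def by (auto split: if_splits)

lemma dpath_Inl: "is_dpath X u es w \<Longrightarrow> is_dpath (tprod X Y) (Inl u) (map Inl es) (Inl w)"
  by (induction es arbitrary: u) (auto simp: tprod_fields)

lemma dpath_Inr: "is_dpath Y u es w \<Longrightarrow> is_dpath (tprod X Y) (glue X Y u) (map Inr es) (glue X Y w)"
  by (induction es arbitrary: u) (auto simp: tprod_fields)

lemma dpath_drop: "is_dpath X u es w \<Longrightarrow> i \<le> length es \<Longrightarrow>
   is_dpath X ((u # map (ttgt X) es) ! i) (drop i es) w"
proof (induction es arbitrary: u i)
  case Nil then show ?case by simp
next
  case (Cons e es)
  then show ?case by (cases i) auto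
qed

lemma dpath_take: "is_dpath X u es w \<Longrightarrow> i \<le> length es \<Longrightarrow>
   is_dpath X u (take i es) ((u # map (ttgt X) es) ! i)"
proof (induction es arbitrary: u i)
  case Nil then show ?case by simp
next
  case (Cons e es)
  then show ?case by (cases i) auto
qed

lemma tree_tprod:
  assumes tX: "is_tree X" and tY: "is_tree Y"
  shows "is_tree (tprod X Y)"
proof -
  define W where "W = tprod X Y"
  note f = tprod_fields[of X Y, folded W_def]
  have fX: "finite (tverts X)" "finite (tedges X)" "card (tedges X) + 1 = card (tverts X)"
    "tstart X \<in> tverts X" "tend X \<in> tverts X"
    and endsX: "\<forall>e\<in>tedges X. tsrc X e \<in> tverts X \<and> ttgt X e \<in> tverts X"
    and cX: "\<forall>u\<in>tverts X. \<forall>w\<in>tverts X. (u, w) \<in> (undir_adj X)\<^sup>*"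
    using tX unfolding is_tree_def by auto
  have fY: "finite (tverts Y)" "finite (tedges Y)" "card (tedges Y) + 1 = card (tverts Y)"
    "tstart Y \<in> tverts Y" "tend Y \<in> tverts Y"
    and endsY: "\<forall>e\<in>tedges Y. tsrc Y e \<in> tverts Y \<and> ttgt Y e \<in> tverts Y"
    and cY: "\<forall>u\<in>tverts Y. \<forall>w\<in>tverts Y. (u, w) \<in> (undir_adj Y)\<^sup>*"
    using tY unfolding is_tree_def by auto
  obtain p where p: "is_dpath X (tstart X) p (tend X)" using tX unfolding is_tree_def by blast
  obtain q where q: "is_dpath Y (tstart Y) q (tend Y)" using tY unfolding is_tree_def by blast
  have V: "tverts W = Inl ` tverts X \<union> Inr ` (tverts Y - {tstart Y})"
  proof -
    have "glue X Y ` tverts Y = insert (Inl (tend X)) (Inr ` (tverts Y - {tstart Y}))"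
      using fY(4) unfolding glue_def by auto
    then show ?thesis using f(1) fX(5) by auto
  qed
  have cardV: "card (tverts W) = card (tverts X) + (card (tverts Y) - 1)"
  proof -
    have "card (tverts W) = card (tverts X) + card (tverts Y - {tstart Y})"
      unfolding V by (subst card_Un_disjoint) (auto simp: card_image fX fY)
    then show ?thesis using fY by simp
  qed
  have cardE: "card (tedges W) = card (tedges X) + card (tedges Y)"
  proof -
    show ?thesis
      unfolding f(2) by (subst card_Un_disjoint) (auto simp: card_image fX fY)
  qed
  have adjX: "(Inl a, Inl b) \<in> (undir_adj W)\<^sup>*" if ab: "(a, b) \<in> undir_adj X" for a b
  proof -
    obtain e where e: "e \<in> tedges X" "(tsrc X e = a \<and> ttgt X e = b) \<or> (tsrc X e = b \<and> ttgt X e = a)"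
      using undir_adjE[OF ab] by blast
    have "Inl e \<in> tedges W" using e f by auto
    then have "(Inl a, Inl b) \<in> undir_adj W" using undir_adjI[of "Inl e" W] e(2) f by auto
    then show ?thesis by simp
  qed
  have adjY: "(glue X Y a, glue X Y b) \<in> (undir_adj W)\<^sup>*" if ab: "(a, b) \<in> undir_adj Y" for a b
  proof -
    obtain e where e: "e \<in> tedges Y" "(tsrc Y e = a \<and> ttgt Y e = b) \<or> (tsrc Y e = b \<and> ttgt Y e = a)"
      using undir_adjE[OF ab] by blast
    have "Inr e \<in> tedges W" using e f by auto
    then have "(glue X Y a, glue X Y b) \<in> undir_adj W" using undir_adjI[of "Inr e" W] e(2) f by auto
    then show ?thesis by simp
  qed
  have toG: "(x, Inl (tend X)) \<in> (undir_adj W)\<^sup>*" if x: "x \<in> tverts W" for x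
  proof -
    from x f(1) consider (l) a where "a \<in> tverts X" "x = Inl a" | (r) a where "a \<in> tverts Y" "x = glue X Y a"
      by auto
    then show ?thesis
    proof cases
      case l
      have "(a, tend X) \<in> (undir_adj X)\<^sup>*" using cX l fX(5) by blast
      then show ?thesis using l(2)
        by (induction rule: rtrancl_induct) (auto intro: rtrancl_trans adjX)
    next
      case r
      have "(a, tstart Y) \<in> (undir_adj Y)\<^sup>*" using cY r fY(4) by blast
      then have "(glue X Y a, glue X Y (tstart Y)) \<in> (undir_adj W)\<^sup>*"
        by (induction rule: rtrancl_induct) (auto intro: rtrancl_trans adjY)
      then show ?thesis using r(2) glue_start[of X Y] by simp
    qed
  qed
  have conn: "\<forall>u\<in>tverts W. \<forall>w\<in>tverts W. (u, w) \<in> (undir_adj W)\<^sup>*"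
    using toG rtrancl_undir_sym by (meson rtrancl_trans)
  have d1: "is_dpath W (Inl (tstart X)) (map Inl p) (Inl (tend X))" using dpath_Inl[OF p, of Y] unfolding W_def .
  have d2: "is_dpath W (Inl (tend X)) (map Inr q) (glue X Y (tend Y))"
    using dpath_Inr[OF q, of X] glue_start[of X Y] unfolding W_def by simp
  have dp: "is_dpath W (tstart W) (map Inl p @ map Inr q) (tend W)"
    unfolding dpath_append f(9,10) using d1 d2 by blast
  show ?thesis
    unfolding W_def[symmetric] is_tree_def
  proof (intro conjI)
    show "finite (tverts W)" "finite (tedges W)" using fX fY f by auto
    show "\<forall>e\<in>tedges W. tsrc W e \<in> tverts W \<and> ttgt W e \<in> tverts W"
      using endsX endsY f by auto
    show "tstart W \<in> tverts W" "tend W \<in> tverts W" using f fX fY by auto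
    show "\<forall>u\<in>tverts W. \<forall>w\<in>tverts W. (u, w) \<in> (undir_adj W)\<^sup>*" by (rule conn)
    show "card (tedges W) + 1 = card (tverts W)" using cardV cardE fX fY by simp
    show "\<exists>es. is_dpath W (tstart W) es (tend W)" using dp by blast
  qed
qed


lemma preA_concat:
  assumes c1: "\<forall>i<a. c i = c1 i" and ca: "c a = c1 a * c2 0"
    and c2: "\<forall>j. 0 < j \<longrightarrow> j \<le> b \<longrightarrow> c (a + j) = c2 j"
    and x1: "\<forall>i. 0 < i \<longrightarrow> i \<le> a \<longrightarrow> x i = x1 i"
    and x2: "\<forall>j. 0 < j \<longrightarrow> j \<le> b \<longrightarrow> x (a + j) = x2 j"
  shows "preA c x (a + b) = preA c1 x1 a * preA c2 x2 b"
proof -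
  have lo: "i < a \<Longrightarrow> preA c x i = preA c1 x1 i" for i
    by (induction i) (use c1 x1 in auto)
  have pa: "preA c x a = preA c1 x1 a * c2 0"
  proof (cases a)
    case 0 then show ?thesis using ca by simp
  next
    case (Suc a')
    then show ?thesis using lo[of a'] ca x1 by (simp add: mult.assoc)
  qed
  have "j \<le> b \<Longrightarrow> preA c x (a + j) = preA c1 x1 a * preA c2 x2 j" for j
  proof (induction j)
    case 0 then show ?case using pa by simp
  next
    case (Suc j)
    have "c (Suc (a + j)) = c2 (Suc j)" "x (Suc (a + j)) = x2 (Suc j)"
      using c2 x2 Suc.prems by (metis add_Suc_right zero_less_Suc)+
    then show ?case using Suc by (simp add: mult.assoc)
  qed
  then show ?thesis by simp
qed

lemma (in gtree) avoid_trunk_fwd: "i < n \<Longrightarrow> avoid X {tend X} (vtx i) (set es) k"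
proof (rule ccontr)
  assume i: "i < n" and na: "\<not> avoid X {tend X} (vtx i) (set es) k"
  obtain p w where p: "uwalk X (vtx i) p w" "nbP (set es) p" "w \<in> {tend X}" using avoid_walk[OF na] by blast
  have q: "is_dpath X (vtx i) (drop i es) (tend X)"
    using dpath_drop[OF dp, of i] i unfolding vtx_def n_def by simp
  have "p = drop i es"
    using walk_unique[OF acX p(1) _ nbP_empty[OF p(2)] dpath_nbP[OF nlX q]] dpath_uwalk[OF q] p(3) by simp
  moreover have "drop i es \<noteq> []" using i unfolding n_def by simp
  moreover have "hd (drop i es) \<in> set es" using i unfolding n_def by (simp add: hd_drop_conv_nth)
  ultimately show False using p(2) unfolding nbP_def by auto
qed

lemma (in gtree) avoid_trunk_bwd: "0 < j \<Longrightarrow> j \<le> n \<Longrightarrow> avoid X {tstart X} (vtx j) (set es) k"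
proof (rule ccontr)
  assume j: "0 < j" "j \<le> n" and na: "\<not> avoid X {tstart X} (vtx j) (set es) k"
  obtain p w where p: "uwalk X (vtx j) p w" "nbP (set es) p" "w \<in> {tstart X}" using avoid_walk[OF na] by blast
  have q: "is_dpath X (tstart X) (take j es) (vtx j)"
    using dpath_take[OF dp, of j] j unfolding vtx_def n_def by simp
  have rp: "uwalk X (tstart X) (rev p) (vtx j)" using uwalk_rev[OF p(1)] p(3) by simp
  have nr: "nbP {} (rev p)" using nbP_empty_rev[of p] nbP_empty[OF p(2)] by (rule iffD2)
  have "rev p = take j es"
    using walk_unique[OF acX rp dpath_uwalk[OF q] nr dpath_nbP[OF nlX q]] .
  then have sp: "set p \<subseteq> set es" by (metis set_rev set_take_subset)
  have "p \<noteq> []"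
  proof
    assume "p = []"
    then have "vtx j = vtx 0" using p by (simp add: vtx_def)
    then show False using vtx_inj[of j 0] j by simp
  qed
  then show False using p(2) sp unfolding nbP_def by (cases p) auto
qed

lemma avoid_child:
  assumes ac: "acyc X" and e: "e \<in> tedges X" "tsrc X e = v \<or> ttgt X e = v"
  shows "avoid X {v} (oth X e v) {e} k"
proof (rule ccontr)
  assume na: "\<not> avoid X {v} (oth X e v) {e} k"
  obtain p w where p: "uwalk X (oth X e v) p w" "nbP {e} p" "w \<in> {v}" using avoid_walk[OF na] by blast
  have w: "uwalk X v (e # p) v" using p e by simp
  have "distinct (wverts X v (e # p))" using walk_distinct[OF ac w, of "{}"] p(2) by simp
  moreover have "wverts X (oth X e v) p ! length p = v" using wverts_last[OF p(1)] p(3) by simp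
  ultimately show False by (metis distinct.simps(2) lessI nth_mem wverts.simps(2) wverts_length)
qed

lemma set_nth_img: "nth xs ` {..<length xs} = set xs"
  by (auto simp: in_set_conv_nth)

lemma prodE_sum:
  assumes "finite A" "finite B" "\<And>z. idem (f z)"
  shows "prodE (Inl ` A \<union> Inr ` B) f = prodE A (\<lambda>a. f (Inl a)) * (prodE B (\<lambda>b. f (Inr b)) :: 'm)"
proof -
  have "prodE (Inl ` A \<union> Inr ` B) f = prodE (Inl ` A) f * prodE (Inr ` B) f"
    using assms by (intro prodE_union) (auto simp: idemOn_def)
  moreover have "prodE (Inl ` A) f = prodE A (\<lambda>a. f (Inl a))"
    using assms by (intro prodE_image) (auto simp: idemOn_def)
  moreover have "prodE (Inr ` B) f = prodE B (\<lambda>b. f (Inr b))"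
    using assms by (intro prodE_image) (auto simp: idemOn_def)
  ultimately show ?thesis by simp
qed


lemma simX:
  assumes gX: "good X" and fY: "finite (tedges Y)" and u: "u \<in> tverts X"
    and av: "avoid X {tend X} u P k" and Q: "\<forall>e\<in>tedges X. Inl e \<in> Q \<longleftrightarrow> e \<in> P"
  shows "tauF chi (tprod X Y) k (Inl u) Q = (tauF chi X k u P :: 'm)"
proof (rule sim[where ge=Inl and gv=Inl and B="{tend X}", OF _ _ _ _ _ _ _ u av Q])
  show "finite (tedges X)" using gX unfolding good_def by simp
  show "finite (tedges (tprod X Y))" using gX fY unfolding good_def tprod_fields by simp
  show "\<forall>e\<in>tedges X. Inl e \<in> tedges (tprod X Y) \<and> tsrc (tprod X Y) (Inl e) = Inl (tsrc X e) \<and>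
      ttgt (tprod X Y) (Inl e) = Inl (ttgt X e) \<and> tlab (tprod X Y) (Inl e) = tlab X e"
    by (simp add: tprod_fields)
  show "inj_on Inl (tedges X)" by simp
  show "\<forall>u\<in>tverts X - {tend X}. \<forall>e'\<in>tedges (tprod X Y). tsrc (tprod X Y) e' = Inl u \<longrightarrow>
      (\<exists>e\<in>tedges X. e' = Inl e \<and> tsrc X e = u)"
    by (auto simp: tprod_fields glue_eq_Inl)
  show "\<forall>u\<in>tverts X - {tend X}. \<forall>e'\<in>tedges (tprod X Y). ttgt (tprod X Y) e' = Inl u \<longrightarrow>
      (\<exists>e\<in>tedges X. e' = Inl e \<and> ttgt X e = u)"
    by (auto simp: tprod_fields glue_eq_Inl)
  show "\<forall>e\<in>tedges X. tsrc X e \<in> tverts X \<and> ttgt X e \<in> tverts X" using gX unfolding good_def by simp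
qed

lemma simY:
  assumes gY: "good Y" and fX: "finite (tedges X)" and u: "u \<in> tverts Y"
    and av: "avoid Y {tstart Y} u P k" and Q: "\<forall>e\<in>tedges Y. Inr e \<in> Q \<longleftrightarrow> e \<in> P"
  shows "tauF chi (tprod X Y) k (glue X Y u) Q = (tauF chi Y k u P :: 'm)"
proof (rule sim[where ge=Inr and gv="glue X Y" and B="{tstart Y}", OF _ _ _ _ _ _ _ u av Q])
  show "finite (tedges Y)" using gY unfolding good_def by simp
  show "finite (tedges (tprod X Y))" using gY fX unfolding good_def tprod_fields by simp
  show "\<forall>e\<in>tedges Y. Inr e \<in> tedges (tprod X Y) \<and> tsrc (tprod X Y) (Inr e) = glue X Y (tsrc Y e) \<and>
      ttgt (tprod X Y) (Inr e) = glue X Y (ttgt Y e) \<and> tlab (tprod X Y) (Inr e) = tlab Y e"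
    by (simp add: tprod_fields)
  show "inj_on Inr (tedges Y)" by simp
  show "\<forall>u\<in>tverts Y - {tstart Y}. \<forall>e'\<in>tedges (tprod X Y). tsrc (tprod X Y) e' = glue X Y u \<longrightarrow>
      (\<exists>e\<in>tedges Y. e' = Inr e \<and> tsrc Y e = u)"
    by (auto simp: tprod_fields glue_def split: if_splits)
  show "\<forall>u\<in>tverts Y - {tstart Y}. \<forall>e'\<in>tedges (tprod X Y). ttgt (tprod X Y) e' = glue X Y u \<longrightarrow>
      (\<exists>e\<in>tedges Y. e' = Inr e \<and> ttgt Y e = u)"
    by (auto simp: tprod_fields glue_def split: if_splits)
  show "\<forall>e\<in>tedges Y. tsrc Y e \<in> tverts Y \<and> ttgt Y e \<in> tverts Y" using gY unfolding good_def by simp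
qed


lemma glue_top:
  assumes gX: "good X" and gY: "good Y"
    and TX: "\<forall>e\<in>tedges X. Inl e \<in> TW \<longleftrightarrow> e \<in> TX" and TY: "\<forall>f\<in>tedges Y. Inr f \<in> TW \<longleftrightarrow> f \<in> TY"
  shows "tauF chi (tprod X Y) (Suc m) (Inl (tend X)) TW =
         tauF chi X (Suc m) (tend X) TX * (tauF chi Y (Suc m) (tstart Y) TY :: 'm)"
proof -
  define W where "W = tprod X Y"
  note f = tprod_fields[of X Y, folded W_def]
  have fX: "finite (tedges X)" and fY: "finite (tedges Y)" using gX gY unfolding good_def by auto
  have acX: "acyc X" and acY: "acyc Y" using gX gY unfolding good_def by auto
  have endsX: "\<forall>e\<in>tedges X. tsrc X e \<in> tverts X \<and> ttgt X e \<in> tverts X"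
    and endsY: "\<forall>e\<in>tedges Y. tsrc Y e \<in> tverts Y \<and> ttgt Y e \<in> tverts Y"
    using gX gY unfolding good_def by auto
  have so: "outS W (Inl (tend X)) TW = Inl ` outS X (tend X) TX \<union> Inr ` outS Y (tstart Y) TY"
    using TX TY by (auto simp: f glue_eq_Inl)
  have si: "inS W (Inl (tend X)) TW = Inl ` inS X (tend X) TX \<union> Inr ` inS Y (tstart Y) TY"
    using TX TY by (auto simp: f glue_eq_Inl)
  have childXo: "tauF chi W m (ttgt W (Inl e)) {Inl e} = tauF chi X m (ttgt X e) {e}"
    if e: "e \<in> outS X (tend X) TX" for e
  proof -
    have o: "oth X e (tend X) = ttgt X e" using e by (simp add: oth_def)
    have "avoid X {tend X} (ttgt X e) {e} m" using avoid_child[OF acX, of e "tend X" m] e o by simp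
    then show ?thesis unfolding W_def f(5)[unfolded W_def]
      using e endsX by (intro simX[OF gX fY]) auto
  qed
  have childXi: "tauF chi W m (tsrc W (Inl e)) {Inl e} = tauF chi X m (tsrc X e) {e}"
    if e: "e \<in> inS X (tend X) TX" for e
  proof -
    have o: "oth X e (tend X) = tsrc X e" using e by (auto simp: oth_def)
    have "avoid X {tend X} (tsrc X e) {e} m" using avoid_child[OF acX, of e "tend X" m] e o by simp
    then show ?thesis unfolding W_def f(3)[unfolded W_def]
      using e endsX by (intro simX[OF gX fY]) auto
  qed
  have childYo: "tauF chi W m (ttgt W (Inr e)) {Inr e} = tauF chi Y m (ttgt Y e) {e}"
    if e: "e \<in> outS Y (tstart Y) TY" for e
  proof -
    have o: "oth Y e (tstart Y) = ttgt Y e" using e by (simp add: oth_def)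
    have "avoid Y {tstart Y} (ttgt Y e) {e} m" using avoid_child[OF acY, of e "tstart Y" m] e o by simp
    then show ?thesis unfolding W_def f(6)[unfolded W_def]
      using e endsY by (intro simY[OF gY fX]) auto
  qed
  have childYi: "tauF chi W m (tsrc W (Inr e)) {Inr e} = tauF chi Y m (tsrc Y e) {e}"
    if e: "e \<in> inS Y (tstart Y) TY" for e
  proof -
    have o: "oth Y e (tstart Y) = tsrc Y e" using e by (auto simp: oth_def)
    have "avoid Y {tstart Y} (tsrc Y e) {e} m" using avoid_child[OF acY, of e "tstart Y" m] e o by simp
    then show ?thesis unfolding W_def f(4)[unfolded W_def]
      using e endsY by (intro simY[OF gY fX]) auto
  qed
  define AX where "AX = prodE (outS X (tend X) TX) (\<lambda>e. aplus (chi (tlab X e) * tauF chi X m (ttgt X e) {e}))"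
  define BX where "BX = prodE (inS X (tend X) TX) (\<lambda>e. astar (tauF chi X m (tsrc X e) {e} * chi (tlab X e)))"
  define AY where "AY = prodE (outS Y (tstart Y) TY) (\<lambda>e. aplus (chi (tlab Y e) * tauF chi Y m (ttgt Y e) {e}))"
  define BY where "BY = prodE (inS Y (tstart Y) TY) (\<lambda>e. astar (tauF chi Y m (tsrc Y e) {e} * chi (tlab Y e)))"
  have A: "prodE (outS W (Inl (tend X)) TW) (\<lambda>e. aplus (chi (tlab W e) * tauF chi W m (ttgt W e) {e})) = AX * AY"
  proof -
    have "prodE (outS W (Inl (tend X)) TW) (\<lambda>e. aplus (chi (tlab W e) * tauF chi W m (ttgt W e) {e})) =
      prodE (outS X (tend X) TX) (\<lambda>e. aplus (chi (tlab W (Inl e)) * tauF chi W m (ttgt W (Inl e)) {Inl e})) *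
      prodE (outS Y (tstart Y) TY) (\<lambda>e. aplus (chi (tlab W (Inr e)) * tauF chi W m (ttgt W (Inr e)) {Inr e}))"
      unfolding so using fX fY by (intro prodE_sum) auto
    also have "prodE (outS X (tend X) TX) (\<lambda>e. aplus (chi (tlab W (Inl e)) * tauF chi W m (ttgt W (Inl e)) {Inl e})) = AX"
      unfolding AX_def using fX childXo by (intro prodE_cong) (auto simp: f)
    also have "prodE (outS Y (tstart Y) TY) (\<lambda>e. aplus (chi (tlab W (Inr e)) * tauF chi W m (ttgt W (Inr e)) {Inr e})) = AY"
      unfolding AY_def using fY childYo by (intro prodE_cong) (auto simp: f)
    finally show ?thesis .
  qed
  have B: "prodE (inS W (Inl (tend X)) TW) (\<lambda>e. astar (tauF chi W m (tsrc W e) {e} * chi (tlab W e))) = BX * BY"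
  proof -
    have "prodE (inS W (Inl (tend X)) TW) (\<lambda>e. astar (tauF chi W m (tsrc W e) {e} * chi (tlab W e))) =
      prodE (inS X (tend X) TX) (\<lambda>e. astar (tauF chi W m (tsrc W (Inl e)) {Inl e} * chi (tlab W (Inl e)))) *
      prodE (inS Y (tstart Y) TY) (\<lambda>e. astar (tauF chi W m (tsrc W (Inr e)) {Inr e} * chi (tlab W (Inr e))))"
      unfolding si using fX fY by (intro prodE_sum) auto
    also have "prodE (inS X (tend X) TX) (\<lambda>e. astar (tauF chi W m (tsrc W (Inl e)) {Inl e} * chi (tlab W (Inl e)))) = BX"
      unfolding BX_def using fX childXi by (intro prodE_cong) (auto simp: f)
    also have "prodE (inS Y (tstart Y) TY) (\<lambda>e. astar (tauF chi W m (tsrc W (Inr e)) {Inr e} * chi (tlab W (Inr e)))) = BY"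
      unfolding BY_def using fY childYi by (intro prodE_cong) (auto simp: f)
    finally show ?thesis .
  qed
  have iAY: "idem AY" and iBX: "idem BX" unfolding AY_def BX_def by (auto intro: idem_prodE_all)
  have "tauF chi W (Suc m) (Inl (tend X)) TW = (AX * AY) * (BX * BY)"
    using A B by (simp add: tauF.simps(2))
  also have "\<dots> = (AX * BX) * (AY * BY)"
  proof -
    have "(AX * AY) * (BX * BY) = AX * ((AY * BX) * BY)" by (simp add: mult.assoc)
    also have "AY * BX = BX * AY" using idem_comm[OF iAY iBX] .
    finally show ?thesis by (simp add: mult.assoc)
  qed
  also have "AX * BX = tauF chi X (Suc m) (tend X) TX" unfolding AX_def BX_def by (simp add: tauF.simps(2))
  also have "AY * BY = tauF chi Y (Suc m) (tstart Y) TY" unfolding AY_def BY_def by (simp add: tauF.simps(2))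
  finally show ?thesis unfolding W_def .
qed


lemma rho_tprod:
  assumes tX: "is_tree X" and tY: "is_tree Y"
  shows "rho chi (tprod X Y) = rho chi X * (rho chi Y :: 'm)"
proof -
  define W where "W = tprod X Y"
  note f = tprod_fields[of X Y, folded W_def]
  have gXg: "good X" using tree_good[OF tX] .
  have gYg: "good Y" using tree_good[OF tY] .
  have gWg: "good W" unfolding W_def using tree_good[OF tree_tprod[OF tX tY]] .
  interpret gX: gtree chi X using adq gXg by unfold_locales
  interpret gY: gtree chi Y using adq gYg by unfold_locales
  interpret gW: gtree chi W using adq gWg by unfold_locales
  have d1: "is_dpath W (Inl (tstart X)) (map Inl gX.es) (Inl (tend X))"
    using dpath_Inl[OF gX.dp, of Y] unfolding W_def .
  have d2: "is_dpath W (Inl (tend X)) (map Inr gY.es) (glue X Y (tend Y))"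
    using dpath_Inr[OF gY.dp, of X] glue_start[of X Y] unfolding W_def by simp
  have dW: "is_dpath W (tstart W) (map Inl gX.es @ map Inr gY.es) (tend W)"
    unfolding dpath_append f(9,10) using d1 d2 by blast
  have esW: "gW.es = map Inl gX.es @ map Inr gY.es"
    unfolding gW.es_def by (rule trunk_eq[OF gW.acX dW])
  have nW: "gW.n = gX.n + gY.n" unfolding gW.n_def gX.n_def gY.n_def esW by simp
  have L: "tstart W # map (ttgt W) gW.es =
      map Inl (tstart X # map (ttgt X) gX.es) @ map (\<lambda>e. glue X Y (ttgt Y e)) gY.es"
    unfolding esW by (simp add: f comp_def)
  have vl: "gW.vtx i = Inl (gX.vtx i)" if i: "i \<le> gX.n" for i
  proof -
    have "gW.vtx i = (map Inl (tstart X # map (ttgt X) gX.es) @ map (\<lambda>e. glue X Y (ttgt Y e)) gY.es) ! i"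
      unfolding gW.vtx_def L ..
    also have "\<dots> = map Inl (tstart X # map (ttgt X) gX.es) ! i"
      using i unfolding gX.n_def by (cases i) (auto simp: nth_append)
    also have "\<dots> = Inl (gX.vtx i)" using i unfolding gX.vtx_def gX.n_def by (simp del: list.map)
    finally show ?thesis .
  qed
  have vr: "gW.vtx (gX.n + j) = Inr (gY.vtx j)" if j: "0 < j" "j \<le> gY.n" for j
  proof -
    have "gW.vtx (gX.n + j) = (map Inl (tstart X # map (ttgt X) gX.es) @ map (\<lambda>e. glue X Y (ttgt Y e)) gY.es) ! (gX.n + j)"
      unfolding gW.vtx_def L ..
    also have "\<dots> = map (\<lambda>e. glue X Y (ttgt Y e)) gY.es ! (j - 1)"
    proof -
      obtain k where k: "j = Suc k" using j by (cases j) auto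
      have "(map Inl (tstart X # map (ttgt X) gX.es) @ map (\<lambda>e. glue X Y (ttgt Y e)) gY.es) ! (gX.n + j)
          = (map Inl (map (ttgt X) gX.es) @ map (\<lambda>e. glue X Y (ttgt Y e)) gY.es) ! (gX.n + k)"
        unfolding k by simp
      also have "\<dots> = map (\<lambda>e. glue X Y (ttgt Y e)) gY.es ! k"
        unfolding gX.n_def by (simp add: nth_append)
      finally show ?thesis using k by simp
    qed
    also have "\<dots> = glue X Y (ttgt Y (gY.es ! (j - 1)))" using j unfolding gY.n_def by simp
    also have "ttgt Y (gY.es ! (j - 1)) = gY.vtx j"
      using gY.es_nth[of "j - 1"] j by simp
    also have "glue X Y (gY.vtx j) = Inr (gY.vtx j)"
    proof -
      have "gY.vtx j \<noteq> gY.vtx 0" using gY.vtx_inj[of j 0] j by auto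
      then show ?thesis unfolding glue_def gY.vtx_def by simp
    qed
    finally show ?thesis .
  qed
  have xl: "gW.xx i = gX.xx i" if i: "0 < i" "i \<le> gX.n" for i
  proof -
    have "gW.es ! (i - 1) = Inl (gX.es ! (i - 1))" using i unfolding esW gX.n_def by (simp add: nth_append)
    then show ?thesis unfolding gW.xx_def gX.xx_def by (simp add: f)
  qed
  have xr: "gW.xx (gX.n + j) = gY.xx j" if j: "0 < j" "j \<le> gY.n" for j
  proof -
    have "gW.es ! (gX.n + j - 1) = Inr (gY.es ! (j - 1))"
      using j unfolding esW gX.n_def gY.n_def by (simp add: nth_append)
    then show ?thesis unfolding gW.xx_def gY.xx_def by (simp add: f)
  qed
  have ccW: "gW.cc i = tauF chi W gW.NN (gW.vtx i) (set gW.es)" for i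
    unfolding gW.cc_def gW.sg_def gW.n_def set_nth_img ..
  have ccX: "gX.cc i = tauF chi X gX.NN (gX.vtx i) (set gX.es)" for i
    unfolding gX.cc_def gX.sg_def gX.n_def set_nth_img ..
  have ccY: "gY.cc i = tauF chi Y gY.NN (gY.vtx i) (set gY.es)" for i
    unfolding gY.cc_def gY.sg_def gY.n_def set_nth_img ..
  have NX: "gX.NN \<le> gW.NN" and NY: "gY.NN \<le> gW.NN"
  proof -
    have "card (tedges W) = card (tedges X) + card (tedges Y)"
      unfolding f(2) by (subst card_Un_disjoint) (auto simp: card_image gX.finE gY.finE)
    then show "gX.NN \<le> gW.NN" "gY.NN \<le> gW.NN" unfolding gX.NN_def gY.NN_def gW.NN_def by simp_all
  qed
  have QX: "\<forall>e\<in>tedges X. Inl e \<in> set gW.es \<longleftrightarrow> e \<in> set gX.es" unfolding esW by auto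
  have QY: "\<forall>e\<in>tedges Y. Inr e \<in> set gW.es \<longleftrightarrow> e \<in> set gY.es" unfolding esW by auto
  have c1: "gW.cc i = gX.cc i" if i: "i < gX.n" for i
  proof -
    have vi: "gX.vtx i \<in> tverts X" using gX.vtxV i by simp
    have "gW.cc i = tauF chi W gW.NN (Inl (gX.vtx i)) (set gW.es)" unfolding ccW using vl[of i] i by simp
    also have "\<dots> = tauF chi X gW.NN (gX.vtx i) (set gX.es)"
      unfolding W_def by (rule simX[OF gXg gY.finE vi gX.avoid_trunk_fwd[OF i] QX[unfolded W_def]])
    also have "\<dots> = gX.cc i" unfolding ccX using gX.stable[OF vi NX] gX.sg_def by simp
    finally show ?thesis .
  qed
  have c3: "gW.cc (gX.n + j) = gY.cc j" if j: "0 < j" "j \<le> gY.n" for j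
  proof -
    have vj: "gY.vtx j \<in> tverts Y" using gY.vtxV j by simp
    have g: "glue X Y (gY.vtx j) = Inr (gY.vtx j)"
    proof -
      have "gY.vtx j \<noteq> gY.vtx 0" using gY.vtx_inj[of j 0] j by auto
      then show ?thesis unfolding glue_def gY.vtx_def by simp
    qed
    have "gW.cc (gX.n + j) = tauF chi W gW.NN (glue X Y (gY.vtx j)) (set gW.es)" unfolding ccW using vr[OF j] g by simp
    also have "\<dots> = tauF chi Y gW.NN (gY.vtx j) (set gY.es)"
      unfolding W_def by (rule simY[OF gYg gX.finE vj gY.avoid_trunk_bwd[OF j] QY[unfolded W_def]])
    also have "\<dots> = gY.cc j" unfolding ccY using gY.stable[OF vj NY] gY.sg_def by simp
    finally show ?thesis .
  qed
  have c2: "gW.cc gX.n = gX.cc gX.n * gY.cc 0"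
  proof -
    have v: "gW.vtx gX.n = Inl (tend X)" using vl[of gX.n] gX.vtx_n by simp
    have vW: "Inl (tend X) \<in> tverts W" using gW.vtxV[of gX.n] v nW by simp
    have vX: "tend X \<in> tverts X" using gX.vtxV[of gX.n] gX.vtx_n by simp
    have vY: "tstart Y \<in> tverts Y" using gY.stV .
    have "gW.cc gX.n = tauF chi W (Suc gW.NN) (Inl (tend X)) (set gW.es)"
      unfolding ccW v using gW.stable[OF vW, of "Suc gW.NN"] gW.sg_def by simp
    also have "\<dots> = tauF chi X (Suc gW.NN) (tend X) (set gX.es) * tauF chi Y (Suc gW.NN) (tstart Y) (set gY.es)"
      unfolding W_def by (rule glue_top[OF gXg gYg QX[unfolded W_def] QY[unfolded W_def]])
    also have "tauF chi X (Suc gW.NN) (tend X) (set gX.es) = gX.cc gX.n"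
      unfolding ccX gX.vtx_n using gX.stable[OF vX, of "Suc gW.NN"] NX gX.sg_def by simp
    also have "tauF chi Y (Suc gW.NN) (tstart Y) (set gY.es) = gY.cc 0"
      unfolding ccY using gY.stable[OF vY, of "Suc gW.NN"] NY gY.sg_def by (simp add: gY.vtx_def)
    finally show ?thesis .
  qed
  have "rho chi W = preA gW.cc gW.xx (gX.n + gY.n)"
    using gW.rho_sufA preA_eq_sufA nW by simp
  also have "\<dots> = preA gX.cc gX.xx gX.n * preA gY.cc gY.xx gY.n"
    by (rule preA_concat) (use c1 c2 c3 xl xr in auto)
  also have "\<dots> = rho chi X * rho chi Y"
    using gX.rho_sufA gY.rho_sufA preA_eq_sufA by simp
  finally show ?thesis unfolding W_def .
qed


lemma rho_trivial: "is_tree X \<Longrightarrow> tedges X = {} \<Longrightarrow> rho chi X = (1 :: 'm)"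
proof -
  assume t: "is_tree X" and E: "tedges X = {}"
  interpret gX: gtree chi X using adq tree_good[OF t] by unfold_locales
  have es: "gX.es = []"
  proof (rule ccontr)
    assume "gX.es \<noteq> []"
    then have "0 < gX.n" unfolding gX.n_def by simp
    then show False using gX.es_nth[of 0] E by simp
  qed
  then have n: "gX.n = 0" unfolding gX.n_def by simp
  have "rho chi X = gX.cc 0" using gX.rho_sufA n by (simp add: sufA_def)
  also have "\<dots> = 1" unfolding gX.cc_def gX.sg_def gX.NN_def n using E by (simp add: tauF.simps(2))
  finally show ?thesis .
qed

end

theorem corollary5p14:
  fixes chi :: "'s \<Rightarrow> 'm::monoid_mult"
  assumes "adequate TYPE('m)"
  shows
    "(\<forall>(X :: ('v, 'e, 's) stree) (Y :: ('w, 'f, 's) stree) Z.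
        is_tree X \<and> is_pruned X \<and> is_tree Y \<and> is_pruned Y \<and>
        is_pruned_retract Z (tprod X Y) \<longrightarrow> rho chi Z = rho chi X * rho chi Y)
   \<and> (\<forall>(X :: ('v, 'e, 's) stree) Z.
        is_tree X \<and> is_pruned X \<and> is_pruned_retract Z (tplus X) \<longrightarrow>
          rho chi Z = aplus (rho chi X))
   \<and> (\<forall>(X :: ('v, 'e, 's) stree) Z.
        is_tree X \<and> is_pruned X \<and> is_pruned_retract Z (tstar X) \<longrightarrow>
          rho chi Z = astar (rho chi X))
   \<and> (\<forall>X :: ('v, 'e, 's) stree. is_tree X \<and> tedges X = {} \<longrightarrow> rho chi X = 1)"
proof -
  interpret adq using assms by unfold_locales
  show ?thesis
  proof (intro conjI allI impI)
    fix X :: "('v, 'e, 's) stree" and Y :: "('w, 'f, 's) stree" and Z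
    assume h: "is_tree X \<and> is_pruned X \<and> is_tree Y \<and> is_pruned Y \<and> is_pruned_retract Z (tprod X Y)"
    then obtain fv fe where r: "is_retraction (tprod X Y) fv fe" "Z = retract_image (tprod X Y) fv fe"
      unfolding is_pruned_retract_def by blast
    have g: "good (tprod X Y)" using tree_good[OF tree_tprod] h by blast
    have "rho chi Z = rho chi (tprod X Y)" by (rule retract_rho[OF g r])
    also have "\<dots> = rho chi X * rho chi Y" using rho_tprod h by blast
    finally show "rho chi Z = rho chi X * rho chi Y" .
  next
    fix X :: "('v, 'e, 's) stree" and Z
    assume h: "is_tree X \<and> is_pruned X \<and> is_pruned_retract Z (tplus X)"
    then obtain fv fe where r: "is_retraction (tplus X) fv fe" "Z = retract_image (tplus X) fv fe"
      unfolding is_pruned_retract_def by blast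
    have g: "good (tplus X)" using tree_good[OF tree_tplus] h by blast
    have "rho chi Z = rho chi (tplus X)" by (rule retract_rho[OF g r])
    also have "\<dots> = aplus (rho chi X)" using rho_tplus h by blast
    finally show "rho chi Z = aplus (rho chi X)" .
  next
    fix X :: "('v, 'e, 's) stree" and Z
    assume h: "is_tree X \<and> is_pruned X \<and> is_pruned_retract Z (tstar X)"
    then obtain fv fe where r: "is_retraction (tstar X) fv fe" "Z = retract_image (tstar X) fv fe"
      unfolding is_pruned_retract_def by blast
    have g: "good (tstar X)" using tree_good[OF tree_tstar] h by blast
    have "rho chi Z = rho chi (tstar X)" by (rule retract_rho[OF g r])
    also have "\<dots> = astar (rho chi X)" using rho_tstar h by blast
    finally show "rho chi Z = astar (rho chi X)" .
  next
    fix X :: "('v, 'e, 's) stree"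
    assume "is_tree X \<and> tedges X = {}"
    then show "rho chi X = 1" using rho_trivial by blast
  qed
qed

end
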